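(* Let $d$ be a real number and $w$ a binary word. If $P_d(w)$ holds, then $P_d(v)$ holds for each (nonempty) prefix $v$ of $w$.
   Context: Words are finite sequences over $\{0,1\}$; $w[i..j]=w[i]\cdots w[j]$; $\bar c$ denotes the letter different from $c$. A period of $w$ is $p\ge1$ with $w[i+p]=w[i]$ for all $1\le i\le|w|-p$. A run of $w$ is an interval $[i..j]$, $1\le i<j\le|w|$, such that with $p$ the least period of $w[i..j]$: $j-i+1\ge 2p$, ($i=1$ or $w[i-1]\ne w[i-1+p]$), and ($j=|w|$ or $w[j+1]\ne w[j+1-p]$). For $c\in\{0,1\}$, $<_c$ is the lexicographic order on words from the letter order $0<_01$, resp. $1<_10$ (proper prefixes are smaller). A nonempty word $x$ is $<$-Lyndon if for every factorization $x=yz$, $y,z$ nonempty, $x\neq zy$ and $x<zy$. For a position $1<i\le|w|$ define: $c_w(i)=\overline{w[i-1]}$; $L_w(i)=\max\{j: w[i..j]$ is $<_{c_w(i)}$-Lyndon$\}$; $D_w(i)=L_w(i)-i+1$; $S_w(i)=\min\{j: D_w(i)$ is a period of $w[j..L_w(i)]\}$; $E_w(i)=\max\{j: D_w(i)$ is a period of $w[i..j]\}$; $R_w(i)=[S_w(i)..E_w(i)]$. For a run $r=[s..e]$ of $w$ with $e=|w|$ and $c\in\{0,1\}$ let $r_w(c)=\min\{i: R_w(i)=r$ and $w[i..L_w(i)]$ is $<_c$-Lyndon$\}$, and let $f_w(r)\in\{0,1\}$ be such that $r_w(f_w(r))\ge r_w(\overline{f_w(r)})$, with $f_w(r)=0$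 if the period of $w[s..e]$ is one. A position $1<i\le|w|$ is lost in $w$ iff one of: (i) $E_w(i)<|w|$, $S_w(i)>1$ and $R_w(i)$ is not a run; (ii) $E_w(i)<|w|$, $R_w(i)$ is a run, and $i+D_w(i)\le E_w(i)$; (iii) $E_w(i)=|w|$, $R_w(i)$ is a run $r$, $i+D_w(i)\le E_w(i)$, $S_w(i)<i$, and $w[i..L_w(i)]$ is $<_{f_w(r)}$-Lyndon. For real $d$ and a binary word $w$ with lost positions $p_1<\dots<p_k$, the predicate $P_d(w)$ holds iff $p_i-1\ge i\,d$ for all $i=1,\dots,k$. *)

theory Defs
  imports Complex_Main "HOL-Library.Sublist"
begin

text \<open>Binary words are bool lists; letter 0 is False, letter 1 is True.
  Positions are 1-based.\<close>

definition nth1 :: "bool list \<Rightarrow> nat \<Rightarrow> bool" where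
  "nth1 w i = w ! (i - 1)"

definition fac :: "bool list \<Rightarrow> nat \<Rightarrow> nat \<Rightarrow> bool list" where
  "fac w i j = take (Suc j - i) (drop (i - 1) w)"

definition is_period :: "bool list \<Rightarrow> nat \<Rightarrow> bool" where
  "is_period x p \<longleftrightarrow> p \<ge> 1 \<and>
     (\<forall>i. 1 \<le> i \<and> i + p \<le> length x \<longrightarrow> nth1 x (i + p) = nth1 x i)"

definition least_period :: "bool list \<Rightarrow> nat" where
  "least_period x = (LEAST p. is_period x p)"

definition is_run :: "bool list \<Rightarrow> nat \<times> nat \<Rightarrow> bool" where
  "is_run w r \<longleftrightarrow> (case r of (i, j) \<Rightarrow>
     1 \<le> i \<and> i < j \<and> j \<le> length w \<and>
     (let p = least_period (fac w i j) in
        2 * p \<le> j - i + 1 \<and>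
        (i = 1 \<or> nth1 w (i - 1) \<noteq> nth1 w (i - 1 + p)) \<and>
        (j = length w \<or> nth1 w (j + 1) \<noteq> nth1 w (j + 1 - p))))"

text \<open>Lexicographic order \<open><_c\<close>: letter c is the smaller letter; proper prefixes are smaller.\<close>
definition lex_less :: "bool \<Rightarrow> bool list \<Rightarrow> bool list \<Rightarrow> bool" where
  "lex_less c x y \<longleftrightarrow>
     (\<exists>v. y = x @ v \<and> v \<noteq> []) \<or>
     (\<exists>u a b v1 v2. x = u @ a # v1 \<and> y = u @ b # v2 \<and> a = c \<and> b = (\<not> c))"

definition lyndon :: "bool \<Rightarrow> bool list \<Rightarrow> bool" where
  "lyndon c x \<longleftrightarrow> x \<noteq> [] \<and>
     (\<forall>y z. y \<noteq> [] \<longrightarrow> z \<noteq> [] \<longrightarrow> x = y @ z \<longrightarrow> x \<noteq> z @ y \<and> lex_less c x (z @ y))"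

definition cw :: "bool list \<Rightarrow> nat \<Rightarrow> bool" where
  "cw w i = (\<not> nth1 w (i - 1))"

definition Lw :: "bool list \<Rightarrow> nat \<Rightarrow> nat" where
  "Lw w i = Max {j. i \<le> j \<and> j \<le> length w \<and> lyndon (cw w i) (fac w i j)}"

definition Dw :: "bool list \<Rightarrow> nat \<Rightarrow> nat" where
  "Dw w i = Lw w i - i + 1"

definition Sw :: "bool list \<Rightarrow> nat \<Rightarrow> nat" where
  "Sw w i = Min {j. 1 \<le> j \<and> j \<le> Lw w i \<and> is_period (fac w j (Lw w i)) (Dw w i)}"

definition Ew :: "bool list \<Rightarrow> nat \<Rightarrow> nat" where
  "Ew w i = Max {j. i \<le> j \<and> j \<le> length w \<and> is_period (fac w i j) (Dw w i)}"

definition Rw :: "bool list \<Rightarrow> nat \<Rightarrow> nat \<times> nat" where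
  "Rw w i = (Sw w i, Ew w i)"

text \<open>r_w(c); the infimum of the empty set of naturals is 0 (convention).\<close>
definition rw :: "bool list \<Rightarrow> nat \<times> nat \<Rightarrow> bool \<Rightarrow> nat" where
  "rw w r c = Inf {i. 1 < i \<and> i \<le> length w \<and> Rw w i = r \<and> lyndon c (fac w i (Lw w i))}"

definition fw :: "bool list \<Rightarrow> nat \<times> nat \<Rightarrow> bool" where
  "fw w r = (if least_period (fac w (fst r) (snd r)) = 1 then False
             else if rw w r False \<ge> rw w r True then False else True)"

definition lost :: "bool list \<Rightarrow> nat \<Rightarrow> bool" where
  "lost w i \<longleftrightarrow> 1 < i \<and> i \<le> length w \<and>
     ((Ew w i < length w \<and> Sw w i > 1 \<and> \<not> is_run w (Rw w i)) \<or>
      (Ew w i < length w \<and> is_run w (Rw w i) \<and> i + Dw w i \<le> Ew w i) \<or>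
      (Ew w i = length w \<and> is_run w (Rw w i) \<and> i + Dw w i \<le> Ew w i \<and> Sw w i < i \<and>
         lyndon (fw w (Rw w i)) (fac w i (Lw w i))))"

definition P :: "real \<Rightarrow> bool list \<Rightarrow> bool" where
  "P d w \<longleftrightarrow> (let ps = sorted_list_of_set {i. lost w i} in
     \<forall>k < length ps. real (ps ! k) - 1 \<ge> real (Suc k) * d)"

end

theory Submission
  imports Defs "HOL-Library.List_Lexorder"
begin


definition lx :: "bool \<Rightarrow> bool list \<Rightarrow> bool list \<Rightarrow> nat \<Rightarrow> bool" where
  "lx c x y K \<longleftrightarrow> K < length x \<and> K < length y \<and> (\<forall>k<K. x!k = y!k) \<and> x!K = c \<and> y!K = (\<not>c)"

lemma lex_less_lexord: "lex_less c x y \<longleftrightarrow> (x,y) \<in> lexord {(a,b). a = c \<and> b = (\<not> c)}"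
  unfolding lex_less_def lexord_def
  by (auto simp: neq_Nil_conv)

lemma take_eq_all: "take K x = take K y \<longleftrightarrow> (\<forall>k<K. k < length x \<and> k < length y \<longrightarrow> x!k = y!k) \<and> min K (length x) = min K (length y)"
  by (auto simp: list_eq_iff_nth_eq min_def split: if_splits)

lemma lex_less_iff: "lex_less c x y \<longleftrightarrow> (length x < length y \<and> take (length x) y = x) \<or> (\<exists>K. lx c x y K)"
  unfolding lex_less_lexord lexord_take_index_conv lx_def
  apply (rule iffI)
   apply (elim disjE exE)
    apply simp
   apply (rule disjI2)
   apply (rule_tac x=i in exI)
   apply (auto simp: take_eq_all)[1]
  apply (elim disjE exE)
   apply simp
  apply (rule disjI2)
  apply (rule_tac x=K in exI)
  apply (auto simp: take_eq_all)
  done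

lemma lx_lex_less: "lx c x y K \<Longrightarrow> lex_less c x y"
  using lex_less_iff by blast

lemma lx_unique: "lx c x y K \<Longrightarrow> lx c y x K' \<Longrightarrow> False"
  unfolding lx_def by (metis linorder_neqE_nat)

lemma lx_ext: "lx c x y K \<Longrightarrow> K < length x' \<Longrightarrow> K < length y' \<Longrightarrow> \<forall>k\<le>K. x'!k = x!k \<Longrightarrow> \<forall>k\<le>K. y'!k = y!k
  \<Longrightarrow> lx c x' y' K"
  unfolding lx_def by auto

lemma lx_append: "lx c x y K \<Longrightarrow> lx c (x@a) (y@b) K"
  unfolding lx_def by (auto simp: nth_append)

lemma lex_less_same_len: "lex_less c x y \<Longrightarrow> length x \<le> length y \<Longrightarrow> length y \<le> length x \<Longrightarrow> \<exists>K. lx c x y K"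
  unfolding lex_less_iff by auto

lemma lex_less_shorter: "lex_less c x y \<Longrightarrow> length y \<le> length x \<Longrightarrow> \<exists>K. lx c x y K"
  unfolding lex_less_iff by auto

lemma rotate_split: "0 < m \<Longrightarrow> m < length x \<Longrightarrow> rotate m x = drop m x @ take m x"
  by (simp add: rotate_drop_take)

lemma lyndon_rot: assumes "lyndon c x" "0 < m" "m < length x"
  shows "rotate m x \<noteq> x \<and> lex_less c x (rotate m x)"
proof -
  have "x = take m x @ drop m x" by simp
  moreover have "take m x \<noteq> []" "drop m x \<noteq> []" using assms by auto
  ultimately show ?thesis using assms(1) rotate_split[OF assms(2,3)] unfolding lyndon_def by metis
qed

lemma lyndon_nonempty: "lyndon c x \<Longrightarrow> x \<noteq> []" by (simp add: lyndon_def)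

lemma lyndon_suffix:
  assumes ly: "lyndon c u" and m: "0 < m" "m < length u"
  shows "\<exists>K. lx c u (drop m u) K"
proof -
  define s where "s = drop m u"
  define p where "p = take m u"
  have ls: "length s = length u - m" and lp: "length p = m" using m by (auto simp: s_def p_def)
  have rot: "rotate m u = s @ p" using rotate_split[OF m] by (simp add: s_def p_def)
  from lyndon_rot[OF ly m] obtain K where K: "lx c u (s@p) K"
    using lex_less_same_len[of c u "s@p"] rot m by (auto simp: ls lp)
  show ?thesis
  proof (cases "K < length s")
    case True
    have "lx c u s K" by (rule lx_ext[OF K]) (use K True in \<open>auto simp: lx_def nth_append\<close>)
    then show ?thesis by (auto simp: s_def)
  next
    case False
    define t where "t = drop (length s) u"
    have lt: "length t = m" using m by (simp add: t_def ls)
    have us: "\<forall>k<length s. u!k = s!k"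
    proof (intro allI impI)
      fix k assume "k < length s"
      hence "u!k = (s@p)!k" using K False unfolding lx_def by auto
      thus "u!k = s!k" using \<open>k < length s\<close> by (simp add: nth_append)
    qed
    have ts: "take (length s) u = s" by (rule nth_equalityI) (use us ls m in auto)
    have u_st: "u = s @ t" by (metis append_take_drop_id t_def ts)
    have u_ps: "u = p @ s" by (simp add: s_def p_def)
    define K1 where "K1 = K - length s"
    have tk: "t!k = u!(length s + k)" if "k < length t" for k using that m by (simp add: t_def ls)
    have pk: "(s@p)!(length s + k) = p!k" for k by simp
    have KK: "K = length s + K1" using False K1_def by simp
    have "lx c t p K1"
    proof -
      have "K < length u" using K by (simp add: lx_def)
      hence a: "K1 < length t" using KK ls lt m by simp
      have "\<forall>k<K1. t!k = p!k"
      proof (intro allI impI)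
        fix k assume "k < K1"
        hence "length s + k < K" "k < length t" using KK a by auto
        thus "t!k = p!k" using K tk[of k] pk[of k] unfolding lx_def by metis
      qed
      moreover have "t!K1 = c" "p!K1 = (\<not>c)" using K tk[OF a] pk[of K1] KK unfolding lx_def by auto
      ultimately show ?thesis using a lt lp unfolding lx_def by auto
    qed
    moreover
    have sp: "0 < length s" "length s < length u" using ls m by auto
    have rot2: "rotate (length s) u = t @ s" using rotate_split[OF sp] ts by (simp add: t_def)
    from lyndon_rot[OF ly sp] obtain K' where K': "lx c u (t@s) K'"
      using lex_less_same_len[of c u "t@s"] rot2 m by (auto simp: ls lt)
    show ?thesis
    proof (cases "K' < length p")
      case True
      have "lx c p t K'" by (rule lx_ext[OF K']) (use K' True u_ps lp lt in \<open>auto simp: lx_def nth_append\<close>)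
      then show ?thesis using \<open>lx c t p K1\<close> lx_unique by blast
    next
      case False
      have "\<forall>k<length p. p!k = t!k"
      proof (intro allI impI)
        fix k assume k: "k < length p"
        hence "u!k = (t@s)!k" using K' False unfolding lx_def by auto
        thus "p!k = t!k" using k lp lt u_ps by (simp add: nth_append)
      qed
      then show ?thesis using \<open>lx c t p K1\<close> unfolding lx_def by (auto simp: lp)
    qed
  qed
qed

lemma lyndon_not_periodic:
  assumes ly: "lyndon c x" and D: "0 < D" "D < length x" and per: "\<forall>k. k + D < length x \<longrightarrow> x!(k+D) = x!k"
  shows False
proof -
  obtain K where K: "lx c x (drop D x) K" using lyndon_suffix[OF ly D] by blast
  hence "K < length x - D" "x!K = c" "drop D x ! K = (\<not>c)" unfolding lx_def by auto
  moreover have "drop D x ! K = x!(K+D)" using D by (simp add: add.commute)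
  moreover have "K + D < length x" using calculation(1) by simp
  ultimately show False using per by simp
qed

lemma lyndon_break_smaller:
  assumes D: "0 < D" "D \<le> N" "N < length x" and per: "\<forall>k. k + D < N \<longrightarrow> x!(k+D) = x!k"
    and br: "x!N = c" "x!(N-D) = (\<not>c)"
  shows "\<not> lyndon c x"
proof
  assume ly: "lyndon c x"
  have D': "D < length x" using D by simp
  obtain K where K: "lx c x (drop D x) K" using lyndon_suffix[OF ly D(1) D'] by blast
  have "lx c (drop D x) x (N-D)"
  proof -
    have "\<forall>k<N-D. drop D x ! k = x!k"
    proof (intro allI impI)
      fix k assume "k < N - D"
      hence "k + D < N" by simp
      hence "x!(k+D) = x!k" using per by blast
      thus "drop D x ! k = x!k" using D by (simp add: add.commute)
    qed
    moreover have "drop D x ! (N-D) = c" using D br by simp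
    moreover have "N - D < length x - D" "N - D < length x" using D by auto
    ultimately show ?thesis unfolding lx_def length_drop using br by blast
  qed
  thus False using K lx_unique by blast
qed

lemma lyndon_from_suffixes:
  assumes "x \<noteq> []" and suf: "\<forall>m. 0 < m \<and> m < length x \<longrightarrow> (\<exists>K. lx c x (drop m x) K)"
  shows "lyndon c x"
proof -
  have "x \<noteq> z @ y \<and> lex_less c x (z @ y)" if y: "y \<noteq> []" and z: "z \<noteq> []" and xyz: "x = y @ z" for y z
  proof -
  have "0 < length y" "length y < length x" using y z xyz by auto
  then obtain K where "lx c x (drop (length y) x) K" using suf by blast
  hence K: "lx c x (z @ y) K" using xyz lx_append[of c x z K "[]" y] by simp
  show "x \<noteq> z @ y \<and> lex_less c x (z @ y)"
    using K lx_lex_less[OF K] unfolding lx_def by auto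
  qed
  thus ?thesis unfolding lyndon_def using assms(1) by blast
qed

lemma per_mod:
  assumes per: "\<forall>k. k + D < N \<longrightarrow> x!(k+D) = x!k" and D: "0 < D"
  shows "k < N \<Longrightarrow> x!k = x!(k mod D)"
proof (induct k rule: less_induct)
  case (less k)
  show ?case
  proof (cases "k < D")
    case True thus ?thesis by simp
  next
    case False
    hence "x!k = x!(k-D)" proof -
      have "(k-D) + D < N" "k - D + D = k" using False less.prems by auto
      thus ?thesis using per by metis
    qed
    moreover have "x!(k-D) = x!((k-D) mod D)" using less D False by simp
    moreover have "(k-D) mod D = k mod D" using False by (simp add: le_mod_geq)
    ultimately show ?thesis by simp
  qed
qed

lemma mod_sub_mult: "(m::nat) mod D = 0 \<Longrightarrow> m \<le> N \<Longrightarrow> (N - m) mod D = N mod D"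
proof -
  assume a: "m mod D = 0" "m \<le> N"
  have "N mod D = ((N - m) + m) mod D" using a by simp
  also have "\<dots> = ((N - m) + m mod D) mod D" by (simp only: mod_add_right_eq)
  finally show ?thesis using a by simp
qed

lemma mod_add_small: "(r::nat) = m mod D \<Longrightarrow> r + k < D \<Longrightarrow> (m + k) mod D = r + k"
proof -
  assume a: "r = m mod D" "r + k < D"
  have "(m + k) mod D = (m mod D + k) mod D" by (simp only: mod_add_left_eq)
  thus ?thesis using a by simp
qed

lemma lyndon_break_bigger:
  assumes ly: "lyndon c (take D x)" and D: "0 < D" "D \<le> N" and len: "length x = Suc N"
    and per: "\<forall>k. k + D < N \<longrightarrow> x!(k+D) = x!k"
    and br: "x!N = (\<not>c)" "x!(N-D) = c"
  shows "lyndon c x"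
proof (rule lyndon_from_suffixes)
  show "x \<noteq> []" using len by auto
  have PM: "x!k = x!(k mod D)" if "k < N" for k using per_mod[OF per D(1) that] .
  have xND: "x!(N mod D) = c"
  proof -
    have "x!(N-D) = x!((N-D) mod D)" using PM D by simp
    moreover have "(N-D) mod D = N mod D" using mod_sub_mult[of D D N] D by simp
    ultimately show ?thesis using br by simp
  qed
  show "\<forall>m. 0 < m \<and> m < length x \<longrightarrow> (\<exists>K. lx c x (drop m x) K)"
  proof (intro allI impI)
    fix m assume m: "0 < m \<and> m < length x"
    hence mN: "m \<le> N" "0 < m" using len by auto
    have dr: "drop m x ! k = x!(m+k)" if "k < length x - m" for k using m that by simp
    define r where "r = m mod D"
    show "\<exists>K. lx c x (drop m x) K"
    proof (cases "r = 0")
      case True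
      have a: "\<forall>k<N-m. x!k = drop m x ! k"
      proof (intro allI impI)
        fix k assume k: "k < N - m"
        have "drop m x ! k = x!(m+k)" using dr k len by simp
        also have "\<dots> = x!((m+k) mod D)" using PM k by simp
        also have "(m+k) mod D = k mod D"
        proof -
          have "(m+k) mod D = (m mod D + k) mod D" by (simp only: mod_add_left_eq)
          thus ?thesis using True r_def by simp
        qed
        also have "x!(k mod D) = x!k" using PM k by simp
        finally show "x!k = drop m x ! k" by simp
      qed
      have b: "drop m x ! (N-m) = (\<not>c)" using dr[of "N-m"] len mN br by simp
      have c': "x!(N-m) = c"
      proof -
        have "x!(N-m) = x!((N-m) mod D)" using PM mN by simp
        also have "(N-m) mod D = N mod D" using mod_sub_mult[of m D N] True r_def mN by simp
        finally show ?thesis using xND by simp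
      qed
      have "N - m < length x" "N - m < length x - m" using len mN by auto
      hence "lx c x (drop m x) (N-m)" unfolding lx_def length_drop using a b c' by blast
      thus ?thesis by blast
    next
      case False
      have r: "0 < r" "r < D" using False D by (auto simp: r_def)
      have lt: "length (take D x) = D" using D len by simp
      have tk: "take D x ! k = x!k" if "k < D" for k using that by simp
      have rl: "r < length (take D x)" using r lt by simp
      obtain K0 where K0: "lx c (take D x) (drop r (take D x)) K0"
        using lyndon_suffix[OF ly r(1) rl] by blast
      have K0D: "K0 < D - r" using K0 lt unfolding lx_def by simp
      have K0c: "x!K0 = c" using K0 K0D tk[of K0] unfolding lx_def by simp
      have K0nc: "x!(r+K0) = (\<not>c)"
      proof -
        have "drop r (take D x) ! K0 = (\<not>c)" using K0 unfolding lx_def by simp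
        moreover have "drop r (take D x) ! K0 = x!(r+K0)" using K0D lt r by simp
        ultimately show ?thesis by simp
      qed
      have K0agree: "x!k = x!(r+k)" if "k < K0" for k
      proof -
        have "take D x ! k = drop r (take D x) ! k" using K0 that unfolding lx_def by blast
        moreover have "drop r (take D x) ! k = x!(r+k)" using K0D that lt r by simp
        moreover have "take D x ! k = x!k" using K0D that by simp
        ultimately show ?thesis by simp
      qed
      have key: "x!(m+k) = x!(r+k)" if "m + k < N" "r + k < D" for k
      proof -
        have "x!(m+k) = x!((m+k) mod D)" using PM that by simp
        also have "(m+k) mod D = r + k" using mod_add_small[OF r_def that(2)] .
        finally show ?thesis .
      qed
      show ?thesis
      proof (cases "m + K0 < N")
        case True
        have a: "\<forall>k<K0. x!k = drop m x ! k"
        proof (intro allI impI)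
          fix k assume k: "k < K0"
          have "drop m x ! k = x!(m+k)" using dr k True len by simp
          also have "\<dots> = x!(r+k)" using key[of k] k True K0D by simp
          finally show "x!k = drop m x ! k" using K0agree[OF k] by simp
        qed
        have b: "drop m x ! K0 = (\<not>c)"
        proof -
          have "drop m x ! K0 = x!(m+K0)" using dr True len by simp
          also have "\<dots> = x!(r+K0)" using key[of K0] True K0D by simp
          finally show ?thesis using K0nc by simp
        qed
        have "K0 < length x" "K0 < length x - m" using K0D True len D by auto
        hence "lx c x (drop m x) K0" unfolding lx_def length_drop using a b K0c by blast
        thus ?thesis by blast
      next
        case False
        have NK: "N - m \<le> K0" using False by simp
        have a: "\<forall>k<N-m. x!k = drop m x ! k"
        proof (intro allI impI)
          fix k assume k: "k < N - m"
          have "drop m x ! k = x!(m+k)" using dr k len by simp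
          also have "\<dots> = x!(r+k)" using key[of k] k NK K0D by simp
          finally show "x!k = drop m x ! k" using K0agree[of k] k NK by simp
        qed
        have b: "drop m x ! (N-m) = (\<not>c)" using dr[of "N-m"] len mN br by simp
        have c': "x!(N-m) = c"
        proof -
          have "N mod D = (m + (N-m)) mod D" using mN by simp
          also have "\<dots> = r + (N-m)" using mod_add_small[OF r_def, of "N-m"] NK K0D by simp
          finally have "x!(r + (N-m)) = c" using xND by simp
          thus ?thesis
          proof (cases "N - m < K0")
            case True thus ?thesis using K0agree[OF True] \<open>x!(r + (N-m)) = c\<close> by simp
          next
            case False hence "N - m = K0" using NK by simp
            thus ?thesis using K0c by simp
          qed
        qed
        have "N - m < length x" "N - m < length x - m" using len mN by auto
      hence "lx c x (drop m x) (N-m)" unfolding lx_def length_drop using a b c' by blast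
        thus ?thesis by blast
      qed
    qed
  qed
qed

lemma lyndon_first_last:
  assumes ly: "lyndon c x" and l: "2 \<le> length x"
  shows "x!0 = c \<and> x!(length x - 1) = (\<not>c)"
proof -
  have m: "0 < length x - 1" "length x - 1 < length x" using l by auto
  obtain K where K: "lx c x (drop (length x - 1) x) K" using lyndon_suffix[OF ly m] by blast
  have "K < 1" using K l unfolding lx_def by simp
  hence "K = 0" by simp
  moreover have "drop (length x - 1) x ! 0 = x!(length x - 1)" using m by simp
  ultimately show ?thesis using K unfolding lx_def by simp
qed

lemma rotate_back: "xs \<noteq> [] \<Longrightarrow> rotate (length xs - m mod length xs) (rotate m xs) = xs"
proof -
  assume ne: "xs \<noteq> []"
  let ?l = "length xs"
  have "rotate (?l - m mod ?l) (rotate m xs) = rotate (?l - m mod ?l + m) xs" by (simp add: rotate_rotate)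
  moreover have "(?l - m mod ?l + m) mod ?l = 0"
  proof -
    have "(?l - m mod ?l + m) mod ?l = (?l - m mod ?l + m mod ?l) mod ?l" by (simp only: mod_add_right_eq)
    also have "?l - m mod ?l + m mod ?l = ?l" using ne by (simp add: less_imp_le)
    finally show ?thesis by simp
  qed
  ultimately show ?thesis by simp
qed

lemma rotate_inj: "rotate m xs = rotate m ys \<Longrightarrow> xs = ys"
proof -
  assume a: "rotate m xs = rotate m ys"
  hence l: "length xs = length ys" by (metis length_rotate)
  show "xs = ys"
  proof (cases "xs = []")
    case True thus ?thesis using l by simp
  next
    case False
    hence "ys \<noteq> []" using l by auto
    thus ?thesis using rotate_back[OF False, of m] rotate_back[of ys m] a l by metis
  qed
qed

lemma lyndon_primitive:
  assumes ly: "lyndon c x" and r: "rotate m x = x" shows "m mod length x = 0"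
proof (rule ccontr)
  assume a: "m mod length x \<noteq> 0"
  have ne: "x \<noteq> []" using ly lyndon_nonempty by blast
  have "0 < m mod length x" "m mod length x < length x" using a ne by auto
  hence "rotate (m mod length x) x \<noteq> x" using lyndon_rot[OF ly] by blast
  thus False using r rotate_conv_mod[of m x] by simp
qed

lemma lex_less_asym_eqlen: "lex_less c x y \<Longrightarrow> lex_less c y x \<Longrightarrow> length x = length y \<Longrightarrow> False"
  using lex_less_same_len[of c x y] lex_less_same_len[of c y x] lx_unique by fastforce

lemma lyndon_conj_unique:
  assumes ly: "lyndon c x" and ly2: "lyndon c (rotate m x)" shows "rotate m x = x"
proof (cases "m mod length x = 0")
  case True thus ?thesis by simp
next
  case False
  have ne: "x \<noteq> []" using ly lyndon_nonempty by blast
  let ?m = "m mod length x"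
  have m: "0 < ?m" "?m < length x" using False ne by auto
  have y: "rotate m x = rotate ?m x" by (rule rotate_conv_mod)
  have 1: "lex_less c x (rotate m x)" using lyndon_rot[OF ly m] y by simp
  have m2: "0 < length x - ?m" "length x - ?m < length (rotate m x)" using m by auto
  have 2: "lex_less c (rotate m x) (rotate (length x - ?m) (rotate m x))" using lyndon_rot[OF ly2 m2] by blast
  have "rotate (length x - ?m) (rotate m x) = x" using rotate_back[OF ne] .
  thus ?thesis using 1 2 lex_less_asym_eqlen by fastforce
qed

definition nm :: "bool \<Rightarrow> bool \<Rightarrow> bool" where "nm c b = (b \<noteq> c)"

lemma inj_nm: "inj (nm c)" unfolding inj_on_def nm_def by auto

lemma nm_less: "nm c a < nm c b \<longleftrightarrow> a = c \<and> b = (\<not>c)" unfolding nm_def by auto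

lemma take_map_nm: "take i (map (nm c) x) = take i (map (nm c) y) \<longleftrightarrow> take i x = take i y"
  by (simp add: take_map inj_map_eq_map[OF inj_nm])

lemma lex_less_map: "lex_less c x y \<longleftrightarrow> map (nm c) x < map (nm c) y"
proof -
  have "lex_less c x y \<longleftrightarrow> (length x < length y \<and> take (length x) y = x) \<or>
     (\<exists>i. i < min (length x) (length y) \<and> take i x = take i y \<and> (x!i, y!i) \<in> {(a,b). a = c \<and> b = (\<not> c)})"
    unfolding lex_less_lexord lexord_take_index_conv ..
  moreover have "map (nm c) x < map (nm c) y \<longleftrightarrow> (length x < length y \<and> take (length x) (map (nm c) y) = map (nm c) x) \<or>
     (\<exists>i. i < min (length x) (length y) \<and> take (length x) (map (nm c) x) = take (length x) (map (nm c) x) \<and> take i (map (nm c) x) = take i (map (nm c) y) \<and> (nm c (x!i), nm c (y!i)) \<in> {(a,b). a < b})"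
    unfolding list_less_def lexord_take_index_conv by auto
  moreover have "take (length x) (map (nm c) y) = map (nm c) x \<longleftrightarrow> take (length x) y = x"
    by (metis take_map_nm length_map take_all order_refl)
  ultimately show ?thesis using take_map_nm nm_less by auto
qed

lemma lyndon_conj_exists:
  assumes ne: "x \<noteq> []" and prim: "\<forall>m. 0 < m \<and> m < length x \<longrightarrow> rotate m x \<noteq> x"
  shows "\<exists>m<length x. lyndon c (rotate m x)"
proof -
  define n where "n = length x"
  define F where "F m = map (nm c) (rotate m x)" for m
  have fin: "finite (F ` {..<n})" by simp
  have nen: "F ` {..<n} \<noteq> {}" using ne n_def by auto
  obtain m0 where m0: "m0 < n" "F m0 = Min (F ` {..<n})" using Min_in[OF fin nen] by auto
  have min: "F m0 \<le> F m" if "m < n" for m using m0(2) Min_le[OF fin] that by simp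
  have "rotate m0 x \<noteq> q @ p \<and> lex_less c (rotate m0 x) (q @ p)"
    if p: "p \<noteq> []" and q: "q \<noteq> []" and pq: "rotate m0 x = p @ q" for p q
  proof -
    define k where "k = length p"
    have k: "0 < k" "k < n" using p q pq by (auto simp: k_def n_def dest: arg_cong[of _ _ length])
    have qp: "q @ p = rotate k (rotate m0 x)" using pq by (simp add: k_def rotate_append)
    also have "\<dots> = rotate ((k + m0) mod n) x" by (simp add: rotate_rotate n_def rotate_conv_mod[of "k+m0" x])
    finally have qp2: "q @ p = rotate ((k + m0) mod n) x" .
    have le: "F m0 \<le> map (nm c) (q @ p)" using min[of "(k + m0) mod n"] qp2 k unfolding F_def by simp
    have neq: "rotate k (rotate m0 x) \<noteq> rotate m0 x"
    proof
      assume "rotate k (rotate m0 x) = rotate m0 x"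
      hence "rotate m0 (rotate k x) = rotate m0 x" by (simp add: rotate_rotate add.commute)
      hence "rotate k x = x" by (rule rotate_inj)
      thus False using prim k n_def by blast
    qed
    hence neq2: "p @ q \<noteq> q @ p" using qp pq by simp
    hence "map (nm c) (p @ q) \<noteq> map (nm c) (q @ p)" using inj_map_eq_map[OF inj_nm] by blast
    hence "map (nm c) (p @ q) < map (nm c) (q @ p)" using le pq unfolding F_def by simp
    thus ?thesis using neq2 lex_less_map pq by simp
  qed
  hence "lyndon c (rotate m0 x)" unfolding lyndon_def using ne by simp
  thus ?thesis using m0 n_def by blast
qed




definition per :: "bool list \<Rightarrow> nat \<Rightarrow> nat \<Rightarrow> nat \<Rightarrow> bool" where
  "per w D s e \<longleftrightarrow> (\<forall>k. s \<le> k \<and> k + D \<le> e \<longrightarrow> nth1 w (k+D) = nth1 w k)"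

lemma fac_len: "1 \<le> i \<Longrightarrow> j \<le> length w \<Longrightarrow> length (fac w i j) = Suc j - i"
  unfolding fac_def by simp

lemma fac_nth: "1 \<le> i \<Longrightarrow> j \<le> length w \<Longrightarrow> k < Suc j - i \<Longrightarrow> fac w i j ! k = nth1 w (i+k)"
  unfolding fac_def nth1_def by (simp add: add.commute)

lemma fac_eq_app: "1 \<le> i \<Longrightarrow> j \<le> length v \<Longrightarrow> fac (v @ u) i j = fac v i j"
  unfolding fac_def by simp

lemma nth1_app: "1 \<le> k \<Longrightarrow> k \<le> length v \<Longrightarrow> nth1 (v @ u) k = nth1 v k"
proof -
  assume "1 \<le> k" "k \<le> length v"
  hence "k - 1 < length v" by simp
  thus ?thesis unfolding nth1_def by (simp add: nth_append)
qed

lemma nth1_app_last: "nth1 (v @ [a]) (Suc (length v)) = a"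
  unfolding nth1_def by simp

lemma per_sub: "per w D s e \<Longrightarrow> s \<le> s' \<Longrightarrow> e' \<le> e \<Longrightarrow> per w D s' e'"
  unfolding per_def by auto

lemma per_combine: "per w D s1 e1 \<Longrightarrow> per w D s2 e2 \<Longrightarrow> s2 + D \<le> Suc e1 \<Longrightarrow> per w D s1 e2"
  unfolding per_def
proof (intro allI impI)
  fix k assume p1: "\<forall>k. s1 \<le> k \<and> k + D \<le> e1 \<longrightarrow> nth1 w (k + D) = nth1 w k"
    and p2: "\<forall>k. s2 \<le> k \<and> k + D \<le> e2 \<longrightarrow> nth1 w (k + D) = nth1 w k"
    and o: "s2 + D \<le> Suc e1" and k: "s1 \<le> k \<and> k + D \<le> e2"
  show "nth1 w (k + D) = nth1 w k"
  proof (cases "k + D \<le> e1")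
    case True thus ?thesis using p1 k by blast
  next
    case False hence "s2 \<le> k" using o by simp
    thus ?thesis using p2 k by blast
  qed
qed

lemma per_mult: "per w D s e \<Longrightarrow> s \<le> p \<Longrightarrow> p + t*D \<le> e \<Longrightarrow> nth1 w (p + t*D) = nth1 w p"
proof (induct t)
  case 0 thus ?case by simp
next
  case (Suc t)
  have "p + t*D + D \<le> e" using Suc.prems by (simp add: add.assoc)
  moreover have "s \<le> p + t*D" using Suc.prems by simp
  ultimately have "nth1 w (p + t*D + D) = nth1 w (p + t*D)" using Suc.prems(1) unfolding per_def by blast
  moreover have "nth1 w (p + t*D) = nth1 w p" using Suc by simp
  moreover have "p + Suc t * D = p + t*D + D" by simp
  ultimately show ?case by metis
qed

lemma per_mod_eq:
  assumes "per w D s e" "0 < D" "s \<le> p" "s \<le> q" "p \<le> e" "q \<le> e" "p mod D = q mod D"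
  shows "nth1 w p = nth1 w q"
proof -
  have gen: "nth1 w p = nth1 w q" if h: "per w D s e" "s \<le> p" "p \<le> q" "q \<le> e" "p mod D = q mod D" for p q
  proof -
    obtain t where t: "q = p + D * t" using mod_eq_nat2E[OF h(5) h(3)] by blast
    thus ?thesis using per_mult[OF h(1) h(2), of t] h(4) by (simp add: mult.commute)
  qed
  show ?thesis
  proof (cases "p \<le> q")
    case True thus ?thesis using gen assms by blast
  next
    case False thus ?thesis using gen[of q p] assms by simp
  qed
qed

lemma nth1_fac: "1 \<le> s \<Longrightarrow> e \<le> length w \<Longrightarrow> 1 \<le> i \<Longrightarrow> i \<le> Suc e - s \<Longrightarrow> nth1 (fac w s e) i = nth1 w (s + i - 1)"
proof -
  assume a: "1 \<le> s" "e \<le> length w" "1 \<le> i" "i \<le> Suc e - s"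
  have "nth1 (fac w s e) i = fac w s e ! (i - 1)" by (simp add: nth1_def)
  also have "\<dots> = nth1 w (s + (i - 1))" using a by (intro fac_nth) auto
  finally show ?thesis using a by simp
qed

lemma is_period_fac:
  assumes s: "1 \<le> s" and e: "e \<le> length w"
  shows "is_period (fac w s e) D \<longleftrightarrow> (1 \<le> D \<and> per w D s e)"
proof
  assume p: "is_period (fac w s e) D"
  hence D: "1 \<le> D" by (simp add: is_period_def)
  have "nth1 w (k+D) = nth1 w k" if k: "s \<le> k" "k + D \<le> e" for k
  proof -
    define i where "i = k - s + 1"
    have i: "1 \<le> i" "i + D \<le> length (fac w s e)" using k s e D by (auto simp: i_def fac_len)
    hence "nth1 (fac w s e) (i + D) = nth1 (fac w s e) i" using p unfolding is_period_def by blast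
    moreover have "nth1 (fac w s e) (i + D) = nth1 w (s + (i + D) - 1)" using i s e D by (intro nth1_fac) (auto simp: fac_len)
    moreover have "nth1 (fac w s e) i = nth1 w (s + i - 1)" using i s e D by (intro nth1_fac) (auto simp: fac_len)
    moreover have "s + (i + D) - 1 = k + D" "s + i - 1 = k" using k i_def by auto
    ultimately show ?thesis by simp
  qed
  thus "1 \<le> D \<and> per w D s e" using D unfolding per_def by blast
next
  assume p: "1 \<le> D \<and> per w D s e"
  have "nth1 (fac w s e) (i + D) = nth1 (fac w s e) i" if i: "1 \<le> i" "i + D \<le> length (fac w s e)" for i
  proof -
    have il: "i + D \<le> Suc e - s" using i s e by (simp add: fac_len)
    have "nth1 (fac w s e) (i + D) = nth1 w (s + (i + D) - 1)" using i s e p il by (intro nth1_fac) auto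
    moreover have "nth1 (fac w s e) i = nth1 w (s + i - 1)" using i s e p il by (intro nth1_fac) auto
    moreover have "s \<le> s + i - 1" "s + i - 1 + D \<le> e" using i il p by auto
    hence "nth1 w (s + i - 1 + D) = nth1 w (s + i - 1)" using p unfolding per_def by blast
    moreover have "s + (i + D) - 1 = s + i - 1 + D" using i by simp
    ultimately show ?thesis by simp
  qed
  thus "is_period (fac w s e) D" using p unfolding is_period_def by blast
qed

lemma fac_same_root:
  assumes pr: "per w D s e" and D: "0 < D" and s: "1 \<le> s" and e: "e \<le> length w"
    and p: "s \<le> p" "p + D \<le> Suc e" and q: "s \<le> q" "q + D \<le> Suc e" and m: "p mod D = q mod D"
  shows "fac w p (p + D - 1) = fac w q (q + D - 1)"
proof (rule nth_equalityI)
  show "length (fac w p (p + D - 1)) = length (fac w q (q + D - 1))" using assms by (simp add: fac_len)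
  fix k assume "k < length (fac w p (p + D - 1))"
  hence k: "k < D" using assms by (simp add: fac_len)
  have "fac w p (p + D - 1) ! k = nth1 w (p + k)" using k assms by (intro fac_nth) auto
  moreover have "fac w q (q + D - 1) ! k = nth1 w (q + k)" using k assms by (intro fac_nth) auto
  moreover have "nth1 w (p + k) = nth1 w (q + k)"
  proof (rule per_mod_eq[OF pr D])
    have "(p + k) mod D = (p mod D + k) mod D" by (simp only: mod_add_left_eq)
    also have "\<dots> = (q mod D + k) mod D" using m by simp
    also have "\<dots> = (q + k) mod D" by (simp only: mod_add_left_eq)
    finally show "(p + k) mod D = (q + k) mod D" .
  qed (use assms k in auto)
  ultimately show "fac w p (p + D - 1) ! k = fac w q (q + D - 1) ! k" by simp
qed

lemma fac_rot:
  assumes pr: "per w D s e" and D: "0 < D" and s: "1 \<le> s" and e: "e \<le> length w"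
    and p: "s \<le> p" "p \<le> q" and q: "q + D \<le> Suc e"
  shows "fac w q (q + D - 1) = rotate (q - p) (fac w p (p + D - 1))"
proof (rule nth_equalityI)
  show "length (fac w q (q + D - 1)) = length (rotate (q - p) (fac w p (p + D - 1)))" using assms by (simp add: fac_len)
  fix k assume "k < length (fac w q (q + D - 1))"
  hence k: "k < D" using assms by (simp add: fac_len)
  have lp: "length (fac w p (p + D - 1)) = D" using assms by (simp add: fac_len)
  have "rotate (q - p) (fac w p (p + D - 1)) ! k = fac w p (p + D - 1) ! ((q - p + k) mod D)"
    using k lp by (simp add: nth_rotate)
  also have "\<dots> = nth1 w (p + (q - p + k) mod D)" using assms by (intro fac_nth) auto
  also have "\<dots> = nth1 w (q + k)"
  proof (rule per_mod_eq[OF pr D])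
    have "(p + (q - p + k) mod D) mod D = (p + (q - p + k)) mod D" by (simp add: mod_add_right_eq)
    also have "p + (q - p + k) = q + k" using p by simp
    finally show "(p + (q - p + k) mod D) mod D = (q + k) mod D" .
    have "(q - p + k) mod D < D" using D by simp
    thus "p + (q - p + k) mod D \<le> e" using p q by linarith
  qed (use assms k in auto)
  also have "\<dots> = fac w q (q + D - 1) ! k" using assms k by (intro fac_nth[symmetric]) auto
  finally show "fac w q (q + D - 1) ! k = rotate (q - p) (fac w p (p + D - 1)) ! k" by simp
qed

lemma lyndon_fac_not_per:
  assumes i: "1 \<le> i" and j: "j \<le> length w" and ly: "lyndon c (fac w i j)" and D: "0 < D" "D < Suc j - i"
    and pr: "per w D i j"
  shows False
proof (rule lyndon_not_periodic[OF ly D(1)])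
  show "D < length (fac w i j)" using i j D by (simp add: fac_len)
  show "\<forall>k. k + D < length (fac w i j) \<longrightarrow> fac w i j ! (k + D) = fac w i j ! k"
  proof (intro allI impI)
    fix k assume k: "k + D < length (fac w i j)"
    hence k': "k + D < Suc j - i" using i j by (simp add: fac_len)
    have "fac w i j ! (k + D) = nth1 w (i + (k + D))" using i j k' by (intro fac_nth) auto
    moreover have "fac w i j ! k = nth1 w (i + k)" using i j k' by (intro fac_nth) auto
    moreover have "nth1 w (i + k + D) = nth1 w (i + k)" using pr k' unfolding per_def by auto
    ultimately show "fac w i j ! (k + D) = fac w i j ! k" by (simp add: add.assoc)
  qed
qed

lemma lyndon_fac_break_smaller:
  assumes i: "1 \<le> i" and j: "j \<le> length w" and pr: "per w D i e" and D: "0 < D" "i + D \<le> Suc e"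
    and ej: "Suc e \<le> j" and br: "nth1 w (Suc e) = c" "nth1 w (Suc e - D) = (\<not>c)"
  shows "\<not> lyndon c (fac w i j)"
proof (rule lyndon_break_smaller[where D=D and N="Suc e - i"])
  show "0 < D" "D \<le> Suc e - i" using D by auto
  show "Suc e - i < length (fac w i j)" using i j ej D by (simp add: fac_len)
  show "\<forall>k. k + D < Suc e - i \<longrightarrow> fac w i j ! (k + D) = fac w i j ! k"
  proof (intro allI impI)
    fix k assume k': "k + D < Suc e - i"
    have "fac w i j ! (k + D) = nth1 w (i + (k + D))" using i j k' ej by (intro fac_nth) auto
    moreover have "fac w i j ! k = nth1 w (i + k)" using i j k' ej by (intro fac_nth) auto
    moreover have "nth1 w (i + k + D) = nth1 w (i + k)" using pr k' unfolding per_def by auto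
    ultimately show "fac w i j ! (k + D) = fac w i j ! k" by (simp add: add.assoc)
  qed
  have "fac w i j ! (Suc e - i) = nth1 w (i + (Suc e - i))" using i j ej D by (intro fac_nth) auto
  thus "fac w i j ! (Suc e - i) = c" using br D by simp
  have "fac w i j ! (Suc e - i - D) = nth1 w (i + (Suc e - i - D))" using i j ej D by (intro fac_nth) auto
  moreover have "i + (Suc e - i - D) = Suc e - D" using D by simp
  ultimately show "fac w i j ! (Suc e - i - D) = (\<not>c)" using br by simp
qed

lemma lyndon_fac_break_bigger:
  assumes i: "1 \<le> i" and el: "Suc e \<le> length w" and pr: "per w D i e" and D: "0 < D" "i + D \<le> Suc e"
    and ly: "lyndon c (fac w i (i + D - 1))"
    and br: "nth1 w (Suc e) = (\<not>c)" "nth1 w (Suc e - D) = c"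
  shows "lyndon c (fac w i (Suc e))"
proof (rule lyndon_break_bigger[where D=D and N="Suc e - i"])
  have "take D (fac w i (Suc e)) = fac w i (i + D - 1)"
  proof -
    have "D \<le> Suc (Suc e) - i" "Suc (i + D - 1) - i = D" using D i by auto
    thus ?thesis unfolding fac_def by (simp add: min_def)
  qed
  thus "lyndon c (take D (fac w i (Suc e)))" using ly by simp
  show "0 < D" "D \<le> Suc e - i" using D by auto
  show "length (fac w i (Suc e)) = Suc (Suc e - i)" using i el D by (simp add: fac_len)
  show "\<forall>k. k + D < Suc e - i \<longrightarrow> fac w i (Suc e) ! (k + D) = fac w i (Suc e) ! k"
  proof (intro allI impI)
    fix k assume k': "k + D < Suc e - i"
    have "fac w i (Suc e) ! (k + D) = nth1 w (i + (k + D))" using i el k' by (intro fac_nth) auto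
    moreover have "fac w i (Suc e) ! k = nth1 w (i + k)" using i el k' by (intro fac_nth) auto
    moreover have "nth1 w (i + k + D) = nth1 w (i + k)" using pr k' unfolding per_def by auto
    ultimately show "fac w i (Suc e) ! (k + D) = fac w i (Suc e) ! k" by (simp add: add.assoc)
  qed
  have "fac w i (Suc e) ! (Suc e - i) = nth1 w (i + (Suc e - i))" using i el D by (intro fac_nth) auto
  thus "fac w i (Suc e) ! (Suc e - i) = (\<not>c)" using br D by simp
  have "fac w i (Suc e) ! (Suc e - i - D) = nth1 w (i + (Suc e - i - D))" using i el D by (intro fac_nth) auto
  moreover have "i + (Suc e - i - D) = Suc e - D" using D by simp
  ultimately show "fac w i (Suc e) ! (Suc e - i - D) = c" using br by simp
qed

lemma lyndon_fac_first_last: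
  assumes i: "1 \<le> i" and j: "j \<le> length w" and ij: "i < j" and ly: "lyndon c (fac w i j)"
  shows "nth1 w i = c \<and> nth1 w j = (\<not>c)"
proof -
  have l: "length (fac w i j) = Suc j - i" using i j by (simp add: fac_len)
  have "fac w i j ! 0 = c \<and> fac w i j ! (length (fac w i j) - 1) = (\<not>c)"
    using lyndon_first_last[OF ly] l ij by simp
  moreover have "fac w i j ! 0 = nth1 w i" using i j ij fac_nth[of i j w 0] by simp
  moreover have "fac w i j ! (j - i) = nth1 w j" using i j ij fac_nth[of i j w "j - i"] by simp
  ultimately show ?thesis using l by simp
qed

lemma lyndon_single: "length x = 1 \<Longrightarrow> lyndon c x"
  unfolding lyndon_def by (auto simp: length_Suc_conv) (metis append_eq_Cons_conv append_is_Nil_conv)+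

lemma fac_single_len: "1 \<le> i \<Longrightarrow> i \<le> length w \<Longrightarrow> length (fac w i i) = 1"
  by (simp add: fac_len)


lemma Lw_basic:
  assumes i: "1 \<le> i" "i \<le> length w"
  shows "i \<le> Lw w i \<and> Lw w i \<le> length w \<and> lyndon (cw w i) (fac w i (Lw w i)) \<and>
    (\<forall>j. Lw w i < j \<and> j \<le> length w \<longrightarrow> \<not> lyndon (cw w i) (fac w i j))"
proof -
  let ?A = "{j. i \<le> j \<and> j \<le> length w \<and> lyndon (cw w i) (fac w i j)}"
  have fin: "finite ?A" by simp
  have "i \<in> ?A" using i lyndon_single fac_single_len by auto
  hence ne: "?A \<noteq> {}" by blast
  have "Lw w i \<in> ?A" unfolding Lw_def using Max_in[OF fin ne] .
  moreover have "\<forall>j. Lw w i < j \<and> j \<le> length w \<longrightarrow> \<not> lyndon (cw w i) (fac w i j)"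
  proof (intro allI impI notI)
    fix j assume j: "Lw w i < j \<and> j \<le> length w" and ly: "lyndon (cw w i) (fac w i j)"
    hence "j \<in> ?A" using \<open>Lw w i \<in> ?A\<close> by auto
    hence "j \<le> Lw w i" unfolding Lw_def using Max_ge[OF fin] by blast
    thus False using j by simp
  qed
  ultimately show ?thesis by blast
qed

lemma Lw_eq:
  assumes i: "1 \<le> i" and L: "i \<le> L" "L \<le> length w" and ly: "lyndon (cw w i) (fac w i L)"
    and mx: "\<forall>j. L < j \<and> j \<le> length w \<longrightarrow> \<not> lyndon (cw w i) (fac w i j)"
  shows "Lw w i = L"
  unfolding Lw_def
proof (rule Max_eqI)
  show "finite {j. i \<le> j \<and> j \<le> length w \<and> lyndon (cw w i) (fac w i j)}" by simp
  show "L \<in> {j. i \<le> j \<and> j \<le> length w \<and> lyndon (cw w i) (fac w i j)}" using L ly by simp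
  fix y assume "y \<in> {j. i \<le> j \<and> j \<le> length w \<and> lyndon (cw w i) (fac w i j)}"
  hence y: "i \<le> y" "y \<le> length w" "lyndon (cw w i) (fac w i y)" by auto
  show "y \<le> L"
  proof (rule ccontr)
    assume "\<not> y \<le> L"
    hence "L < y" by simp
    thus False using mx y by blast
  qed
qed

lemma Dw_Lw: "1 \<le> i \<Longrightarrow> i \<le> length w \<Longrightarrow> Lw w i = i + Dw w i - 1 \<and> 1 \<le> Dw w i"
proof -
  assume "1 \<le> i" "i \<le> length w"
  hence "i \<le> Lw w i" using Lw_basic[of i w] by blast
  thus ?thesis unfolding Dw_def by simp
qed

lemma Sw_basic:
  assumes i: "1 \<le> i" "i \<le> length w"
  shows "1 \<le> Sw w i \<and> Sw w i \<le> i \<and> per w (Dw w i) (Sw w i) (Lw w i) \<and>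
    (Sw w i = 1 \<or> nth1 w (Sw w i - 1) \<noteq> nth1 w (Sw w i - 1 + Dw w i))"
proof -
  define L where "L = Lw w i"
  define D where "D = Dw w i"
  have LD: "L = i + D - 1" "1 \<le> D" "L \<le> length w"
  proof -
    show "L = i + D - 1" "1 \<le> D" using Dw_Lw[OF i] by (simp_all add: L_def D_def)
    show "L \<le> length w" using Lw_basic[OF i] L_def by blast
  qed
  let ?T = "{j. 1 \<le> j \<and> j \<le> L \<and> is_period (fac w j L) D}"
  have fin: "finite ?T" by simp
  have Tiff: "j \<in> ?T \<longleftrightarrow> 1 \<le> j \<and> j \<le> L \<and> per w D j L" for j
  proof -
    have "1 \<le> j \<Longrightarrow> is_period (fac w j L) D \<longleftrightarrow> per w D j L" using is_period_fac[of j L w D] LD by blast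
    thus ?thesis by blast
  qed
  have "per w D i L" unfolding per_def using LD by auto
  hence "i \<in> ?T" using Tiff i LD by auto
  hence ne: "?T \<noteq> {}" by blast
  have S: "Sw w i = Min ?T" unfolding Sw_def L_def D_def ..
  have Sin: "Sw w i \<in> ?T" using S Min_in[OF fin ne] by simp
  have Sle: "Sw w i \<le> i" using S Min_le[OF fin \<open>i \<in> ?T\<close>] by simp
  have brk: "Sw w i = 1 \<or> nth1 w (Sw w i - 1) \<noteq> nth1 w (Sw w i - 1 + D)"
  proof (rule ccontr)
    assume "\<not> ?thesis"
    hence a: "Sw w i \<noteq> 1" "nth1 w (Sw w i - 1) = nth1 w (Sw w i - 1 + D)" by auto
    have pS: "per w D (Sw w i - 1) L" unfolding per_def
    proof (intro allI impI)
      fix k assume k: "Sw w i - 1 \<le> k \<and> k + D \<le> L"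
      show "nth1 w (k + D) = nth1 w k"
      proof (cases "k = Sw w i - 1")
        case True thus ?thesis using a by simp
      next
        case False hence "Sw w i \<le> k" using k by arith
        thus ?thesis using Sin Tiff k unfolding per_def by blast
      qed
    qed
    have S1: "1 \<le> Sw w i" "Sw w i \<le> L" using Sin Tiff by blast+
    moreover have "1 \<le> Sw w i - 1" using a S1 by linarith
    moreover have "Sw w i - 1 \<le> L" using S1 by linarith
    ultimately have "Sw w i - 1 \<in> ?T" using Tiff pS by blast
    hence "Sw w i \<le> Sw w i - 1" using S Min_le[OF fin] by simp
    thus False using a S1 by linarith
  qed
  have "1 \<le> Sw w i" "per w D (Sw w i) L" using Sin Tiff by blast+
  thus ?thesis using Sle brk by (simp add: L_def D_def)
qed

lemma Sw_eq:
  assumes i: "1 \<le> i" "i \<le> length w" and S: "1 \<le> S" "S \<le> i" and pr: "per w (Dw w i) S (Lw w i)"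
    and brk: "S = 1 \<or> nth1 w (S - 1) \<noteq> nth1 w (S - 1 + Dw w i)"
  shows "Sw w i = S"
proof -
  define L where "L = Lw w i"
  define D where "D = Dw w i"
  have LD: "L = i + D - 1" "1 \<le> D" "L \<le> length w"
  proof -
    show "L = i + D - 1" "1 \<le> D" using Dw_Lw[OF i] by (simp_all add: L_def D_def)
    show "L \<le> length w" using Lw_basic[OF i] L_def by blast
  qed
  let ?T = "{j. 1 \<le> j \<and> j \<le> L \<and> is_period (fac w j L) D}"
  have fin: "finite ?T" by simp
  have Tiff: "j \<in> ?T \<longleftrightarrow> 1 \<le> j \<and> j \<le> L \<and> per w D j L" for j
  proof -
    have "1 \<le> j \<Longrightarrow> is_period (fac w j L) D \<longleftrightarrow> per w D j L" using is_period_fac[of j L w D] LD by blast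
    thus ?thesis by blast
  qed
  have "Min ?T = S"
  proof (rule Min_eqI[OF fin])
    show "S \<in> ?T" using Tiff S pr LD i by (auto simp: L_def D_def)
    fix y assume y: "y \<in> ?T"
    show "S \<le> y"
    proof (rule ccontr)
      assume "\<not> S \<le> y"
      hence "y \<le> S - 1" "S \<noteq> 1" using y Tiff by auto
      moreover have "S - 1 + D \<le> L" using S LD by simp
      ultimately have "nth1 w (S - 1 + D) = nth1 w (S - 1)" using y Tiff unfolding per_def by blast
      thus False using brk \<open>S \<noteq> 1\<close> by (simp add: D_def)
    qed
  qed
  thus ?thesis unfolding Sw_def L_def D_def .
qed

lemma Ew_basic:
  assumes i: "1 \<le> i" "i \<le> length w"
  shows "Lw w i \<le> Ew w i \<and> Ew w i \<le> length w \<and> per w (Dw w i) i (Ew w i) \<and>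
    (Ew w i = length w \<or> nth1 w (Suc (Ew w i)) \<noteq> nth1 w (Suc (Ew w i) - Dw w i))"
proof -
  define L where "L = Lw w i"
  define D where "D = Dw w i"
  have LD: "L = i + D - 1" "1 \<le> D" "L \<le> length w"
  proof -
    show "L = i + D - 1" "1 \<le> D" using Dw_Lw[OF i] by (simp_all add: L_def D_def)
    show "L \<le> length w" using Lw_basic[OF i] L_def by blast
  qed
  let ?U = "{j. i \<le> j \<and> j \<le> length w \<and> is_period (fac w i j) D}"
  have fin: "finite ?U" by simp
  have Uiff: "j \<in> ?U \<longleftrightarrow> i \<le> j \<and> j \<le> length w \<and> per w D i j" for j
  proof -
    have "is_period (fac w i j) D \<longleftrightarrow> per w D i j" if "j \<le> length w" using is_period_fac[of i j w D] LD i that by blast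
    thus ?thesis by blast
  qed
  have "per w D i L" unfolding per_def using LD by auto
  hence "L \<in> ?U" using Uiff i LD by auto
  hence ne: "?U \<noteq> {}" by blast
  have E: "Ew w i = Max ?U" unfolding Ew_def D_def ..
  have Ein: "Ew w i \<in> ?U" using E Max_in[OF fin ne] by simp
  have Ege: "L \<le> Ew w i" using E Max_ge[OF fin \<open>L \<in> ?U\<close>] by simp
  have brk: "Ew w i = length w \<or> nth1 w (Suc (Ew w i)) \<noteq> nth1 w (Suc (Ew w i) - D)"
  proof (rule ccontr)
    assume "\<not> ?thesis"
    hence a: "Ew w i \<noteq> length w" "nth1 w (Suc (Ew w i)) = nth1 w (Suc (Ew w i) - D)" by auto
    have "per w D i (Suc (Ew w i))" unfolding per_def
    proof (intro allI impI)
      fix k assume k: "i \<le> k \<and> k + D \<le> Suc (Ew w i)"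
      show "nth1 w (k + D) = nth1 w k"
      proof (cases "k + D = Suc (Ew w i)")
        case True thus ?thesis using a by (metis add_diff_cancel_right')
      next
        case False hence "k + D \<le> Ew w i" using k by simp
        thus ?thesis using Ein Uiff k unfolding per_def by blast
      qed
    qed
    moreover have "Suc (Ew w i) \<le> length w" using a Ein Uiff by auto
    ultimately have "Suc (Ew w i) \<in> ?U" using Uiff Ein by auto
    hence "Suc (Ew w i) \<le> Ew w i" using E Max_ge[OF fin] by simp
    thus False by simp
  qed
  show ?thesis using Ein Uiff Ege brk by (auto simp: L_def D_def)
qed

lemma Ew_eq:
  assumes i: "1 \<le> i" "i \<le> length w" and E: "Lw w i \<le> E" "E \<le> length w" and pr: "per w (Dw w i) i E"
    and brk: "E = length w \<or> nth1 w (Suc E) \<noteq> nth1 w (Suc E - Dw w i)"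
  shows "Ew w i = E"
proof -
  define L where "L = Lw w i"
  define D where "D = Dw w i"
  have LD: "L = i + D - 1" "1 \<le> D" "L \<le> length w"
  proof -
    show "L = i + D - 1" "1 \<le> D" using Dw_Lw[OF i] by (simp_all add: L_def D_def)
    show "L \<le> length w" using Lw_basic[OF i] L_def by blast
  qed
  let ?U = "{j. i \<le> j \<and> j \<le> length w \<and> is_period (fac w i j) D}"
  have fin: "finite ?U" by simp
  have Uiff: "j \<in> ?U \<longleftrightarrow> i \<le> j \<and> j \<le> length w \<and> per w D i j" for j
  proof -
    have "is_period (fac w i j) D \<longleftrightarrow> per w D i j" if "j \<le> length w" using is_period_fac[of i j w D] LD i that by blast
    thus ?thesis by blast
  qed
  have "Max ?U = E"
  proof (rule Max_eqI[OF fin])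
    show "E \<in> ?U" using Uiff E pr LD i by (auto simp: L_def D_def)
    fix y assume y: "y \<in> ?U"
    show "y \<le> E"
    proof (rule ccontr)
      assume "\<not> y \<le> E"
      hence "Suc E \<le> y" "E \<noteq> length w" using y Uiff by auto
      moreover have "i \<le> Suc E - D" "Suc E - D + D = Suc E" using E LD by (auto simp: L_def)
      ultimately have "nth1 w (Suc E) = nth1 w (Suc E - D)" using y Uiff unfolding per_def by metis
      thus False using brk \<open>E \<noteq> length w\<close> by (simp add: D_def)
    qed
  qed
  thus ?thesis unfolding Ew_def D_def .
qed




lemma LDE:
  assumes i: "1 \<le> i" "i \<le> length w"
  shows "Lw w i = i + Dw w i - 1" "1 \<le> Dw w i" "i \<le> Lw w i" "Lw w i \<le> length w"
    "lyndon (cw w i) (fac w i (Lw w i))"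
    "\<And>j. Lw w i < j \<Longrightarrow> j \<le> length w \<Longrightarrow> \<not> lyndon (cw w i) (fac w i j)"
    "1 \<le> Sw w i" "Sw w i \<le> i" "per w (Dw w i) (Sw w i) (Lw w i)"
    "Sw w i = 1 \<or> nth1 w (Sw w i - 1) \<noteq> nth1 w (Sw w i - 1 + Dw w i)"
    "Lw w i \<le> Ew w i" "Ew w i \<le> length w" "per w (Dw w i) i (Ew w i)"
    "Ew w i = length w \<or> nth1 w (Suc (Ew w i)) \<noteq> nth1 w (Suc (Ew w i) - Dw w i)"
  using Dw_Lw[OF i] Lw_basic[OF i] Sw_basic[OF i] Ew_basic[OF i] by blast+

lemma Ew_break_smaller:
  assumes i: "1 \<le> i" "i \<le> length w" and E: "Ew w i < length w"
  shows "nth1 w (Suc (Ew w i)) = cw w i \<and> nth1 w (Suc (Ew w i) - Dw w i) = (\<not> cw w i)"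
proof (rule ccontr)
  assume a: "\<not> ?thesis"
  have ne: "nth1 w (Suc (Ew w i)) \<noteq> nth1 w (Suc (Ew w i) - Dw w i)" using LDE(14)[OF i] E by simp
  hence b: "nth1 w (Suc (Ew w i)) = (\<not> cw w i)" "nth1 w (Suc (Ew w i) - Dw w i) = cw w i" using a by auto
  have "lyndon (cw w i) (fac w i (Suc (Ew w i)))"
  proof (rule lyndon_fac_break_bigger[OF i(1) _ LDE(13)[OF i]])
    show "Suc (Ew w i) \<le> length w" using E by simp
    show "0 < Dw w i" using LDE(2)[OF i] by simp
    show "i + Dw w i \<le> Suc (Ew w i)" using LDE(1,11)[OF i] by simp
    show "lyndon (cw w i) (fac w i (i + Dw w i - 1))" using LDE(1,5)[OF i] by simp
  qed (use b in auto)
  moreover have "Lw w i < Suc (Ew w i)" using LDE(11)[OF i] by simp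
  ultimately show False using LDE(6)[OF i, of "Suc (Ew w i)"] E by simp
qed

lemma cw_app: "2 \<le> i \<Longrightarrow> i \<le> Suc (length v) \<Longrightarrow> cw (v @ u) i = cw v i"
  unfolding cw_def using nth1_app[of "i - 1" v u] by simp

lemma Lw_app:
  assumes i: "2 \<le> i" "i \<le> length v" and nl: "\<not> lyndon (cw v i) (fac (v @ [a]) i (Suc (length v)))"
  shows "Lw (v @ [a]) i = Lw v i"
proof (rule Lw_eq)
  have i1: "1 \<le> i" "i \<le> length v" using i by auto
  show "1 \<le> i" using i by simp
  show "i \<le> Lw v i" "Lw v i \<le> length (v @ [a])" using LDE(3,4)[OF i1] by auto
  show "lyndon (cw (v @ [a]) i) (fac (v @ [a]) i (Lw v i))"
    using LDE(4,5)[OF i1] cw_app[of i v "[a]"] fac_eq_app[of i "Lw v i" v "[a]"] i by simp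
  show "\<forall>j. Lw v i < j \<and> j \<le> length (v @ [a]) \<longrightarrow> \<not> lyndon (cw (v @ [a]) i) (fac (v @ [a]) i j)"
  proof (intro allI impI)
    fix j assume j: "Lw v i < j \<and> j \<le> length (v @ [a])"
    show "\<not> lyndon (cw (v @ [a]) i) (fac (v @ [a]) i j)"
    proof (cases "j \<le> length v")
      case True
      thus ?thesis using LDE(6)[OF i1, of j] j cw_app[of i v "[a]"] fac_eq_app[of i j v "[a]"] i by simp
    next
      case False hence "j = Suc (length v)" using j by simp
      thus ?thesis using nl cw_app[of i v "[a]"] i by simp
    qed
  qed
qed

lemma Lw_app2:
  assumes i: "2 \<le> i" "i \<le> length v" and L: "Lw (v @ [a]) i \<le> length v"
  shows "Lw v i = Lw (v @ [a]) i"
proof (rule Lw_eq)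
  have i1: "1 \<le> i" "i \<le> length (v @ [a])" using i by auto
  show "1 \<le> i" using i by simp
  show "i \<le> Lw (v @ [a]) i" using LDE(3)[OF i1] .
  show "Lw (v @ [a]) i \<le> length v" using L .
  show "lyndon (cw v i) (fac v i (Lw (v @ [a]) i))"
    using LDE(5)[OF i1] cw_app[of i v "[a]"] fac_eq_app[of i "Lw (v @ [a]) i" v "[a]"] i L by simp
  show "\<forall>j. Lw (v @ [a]) i < j \<and> j \<le> length v \<longrightarrow> \<not> lyndon (cw v i) (fac v i j)"
  proof (intro allI impI)
    fix j assume j: "Lw (v @ [a]) i < j \<and> j \<le> length v"
    thus "\<not> lyndon (cw v i) (fac v i j)"
      using LDE(6)[OF i1, of j] cw_app[of i v "[a]"] fac_eq_app[of i j v "[a]"] i by simp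
  qed
qed

lemma Sw_app:
  assumes i: "1 \<le> i" and L: "Lw (v @ u) i = Lw v i" "Lw v i \<le> length v"
  shows "Sw (v @ u) i = Sw v i"
proof -
  have D: "Dw (v @ u) i = Dw v i" using L by (simp add: Dw_def)
  have "{j. 1 \<le> j \<and> j \<le> Lw (v @ u) i \<and> is_period (fac (v @ u) j (Lw (v @ u) i)) (Dw (v @ u) i)}
      = {j. 1 \<le> j \<and> j \<le> Lw v i \<and> is_period (fac v j (Lw v i)) (Dw v i)}"
    using L D fac_eq_app[of _ "Lw v i" v u] by auto
  thus ?thesis unfolding Sw_def by simp
qed

lemma is_run_iff: "is_run w (S, E) \<longleftrightarrow> 1 \<le> S \<and> S < E \<and> E \<le> length w \<and>
   2 * least_period (fac w S E) \<le> E - S + 1 \<and>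
   (S = 1 \<or> nth1 w (S - 1) \<noteq> nth1 w (S - 1 + least_period (fac w S E))) \<and>
   (E = length w \<or> nth1 w (E + 1) \<noteq> nth1 w (E + 1 - least_period (fac w S E)))"
  by (simp add: is_run_def Let_def)

lemma is_run_app:
  assumes E: "Suc E \<le> length v"
  shows "is_run (v @ u) (S, E) = is_run v (S, E)"
proof (cases "1 \<le> S \<and> S < E")
  case False thus ?thesis unfolding is_run_def by auto
next
  case True
  have f: "fac (v @ u) S E = fac v S E" using True E by (intro fac_eq_app) auto
  define p where "p = least_period (fac v S E)"
  have c1: "(S = 1 \<or> nth1 (v @ u) (S - 1) \<noteq> nth1 (v @ u) (S - 1 + p)) \<longleftrightarrow> (S = 1 \<or> nth1 v (S - 1) \<noteq> nth1 v (S - 1 + p))"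
    if "2 * p \<le> E - S + 1"
  proof (cases "S = 1")
    case False
    have "nth1 (v @ u) (S - 1) = nth1 v (S - 1)" using False True E by (intro nth1_app) auto
    moreover have "nth1 (v @ u) (S - 1 + p) = nth1 v (S - 1 + p)" using that False True E by (intro nth1_app) auto
    ultimately show ?thesis by simp
  qed simp
  have c2: "(E = length (v @ u) \<or> nth1 (v @ u) (E + 1) \<noteq> nth1 (v @ u) (E + 1 - p)) \<longleftrightarrow> (E = length v \<or> nth1 v (E + 1) \<noteq> nth1 v (E + 1 - p))"
    if "2 * p \<le> E - S + 1" "1 \<le> p"
  proof -
    have "nth1 (v @ u) (E + 1) = nth1 v (E + 1)" using True E by (intro nth1_app) auto
    moreover have "nth1 (v @ u) (E + 1 - p) = nth1 v (E + 1 - p)" using that True E by (intro nth1_app) auto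
    moreover have "E \<noteq> length (v @ u)" "E \<noteq> length v" using E by auto
    ultimately show ?thesis by simp
  qed
  have p1: "1 \<le> p"
  proof -
    have "is_period (fac v S E) (E - S + 1)" unfolding is_period_def using True E by (auto simp: fac_len)
    hence "is_period (fac v S E) p" unfolding p_def least_period_def by (rule LeastI)
    thus ?thesis by (simp add: is_period_def)
  qed
  have l: "E \<le> length (v @ u)" "E \<le> length v" using E by auto
  show ?thesis unfolding is_run_iff f p_def[symmetric] using c1 c2 p1 True l by blast
qed

lemma per_app: "per v D s e \<Longrightarrow> e \<le> length v \<Longrightarrow> 1 \<le> s \<Longrightarrow> per (v @ u) D s e"
  unfolding per_def
proof (intro allI impI)
  fix k assume p: "\<forall>k. s \<le> k \<and> k + D \<le> e \<longrightarrow> nth1 v (k + D) = nth1 v k" and e: "e \<le> length v"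
    and s: "1 \<le> s" and k: "s \<le> k \<and> k + D \<le> e"
  have "nth1 (v @ u) (k + D) = nth1 v (k + D)" using k e s by (intro nth1_app) auto
  moreover have "nth1 (v @ u) k = nth1 v k" using k e s by (intro nth1_app) auto
  ultimately show "nth1 (v @ u) (k + D) = nth1 (v @ u) k" using p k by simp
qed

lemma per_app_back: "per (v @ u) D s e \<Longrightarrow> e \<le> length v \<Longrightarrow> 1 \<le> s \<Longrightarrow> per v D s e"
  unfolding per_def
proof (intro allI impI)
  fix k assume p: "\<forall>k. s \<le> k \<and> k + D \<le> e \<longrightarrow> nth1 (v @ u) (k + D) = nth1 (v @ u) k" and e: "e \<le> length v"
    and s: "1 \<le> s" and k: "s \<le> k \<and> k + D \<le> e"
  have "nth1 (v @ u) (k + D) = nth1 v (k + D)" using k e s by (intro nth1_app) auto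
  moreover have "nth1 (v @ u) k = nth1 v k" using k e s by (intro nth1_app) auto
  ultimately show "nth1 v (k + D) = nth1 v k" using p k by simp
qed

lemma case1:
  assumes i: "2 \<le> i" "i \<le> length v" and E: "Ew v i < length v" and lv: "lost v i"
  shows "lost (v @ [a]) i"
proof -
  define u where "u = v @ [a]"
  have i1: "1 \<le> i" "i \<le> length v" using i by auto
  have i1u: "1 \<le> i" "i \<le> length u" using i by (auto simp: u_def)
  define D where "D = Dw v i"
  define E' where "E' = Ew v i"
  define c where "c = cw v i"
  have br: "nth1 v (Suc E') = c" "nth1 v (Suc E' - D) = (\<not> c)"
    using Ew_break_smaller[OF i1 E] by (auto simp: E'_def D_def c_def)
  have D1: "1 \<le> D" "Lw v i = i + D - 1" using LDE[OF i1] by (auto simp: D_def)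
  have LE: "Lw v i \<le> E'" using LDE[OF i1] by (simp add: E'_def)
  have pv: "per v D i E'" using LDE[OF i1] by (simp add: D_def E'_def)
  have pu: "per u D i E'" unfolding u_def using per_app[OF pv] E i by (simp add: E'_def)
  have bru: "nth1 u (Suc E') = c" "nth1 u (Suc E' - D) = (\<not> c)"
  proof -
    have "nth1 u (Suc E') = nth1 v (Suc E')" unfolding u_def using E by (intro nth1_app) (auto simp: E'_def)
    thus "nth1 u (Suc E') = c" using br by simp
    have "nth1 u (Suc E' - D) = nth1 v (Suc E' - D)" unfolding u_def using E D1 LE i by (intro nth1_app) (auto simp: E'_def)
    thus "nth1 u (Suc E' - D) = (\<not> c)" using br by simp
  qed
  have nl: "\<not> lyndon (cw v i) (fac u i (Suc (length v)))"
    unfolding c_def[symmetric]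
  proof (rule lyndon_fac_break_smaller[OF i1(1) _ pu])
    show "Suc (length v) \<le> length u" by (simp add: u_def)
    show "0 < D" "i + D \<le> Suc E'" using D1 LE by auto
    show "Suc E' \<le> Suc (length v)" using E by (simp add: E'_def)
  qed (use bru in auto)
  have L: "Lw u i = Lw v i" using Lw_app[OF i nl[unfolded u_def]] by (simp add: u_def)
  have Du: "Dw u i = D" using L by (simp add: Dw_def D_def)
  have S: "Sw u i = Sw v i" using Sw_app[OF i1(1) L[unfolded u_def]] LDE(4)[OF i1] by (simp add: u_def)
  have Eu: "Ew u i = E'"
  proof (rule Ew_eq[OF i1u])
    show "Lw u i \<le> E'" using L LE by simp
    show "E' \<le> length u" using E by (simp add: E'_def u_def)
    show "per u (Dw u i) i E'" using pu Du by simp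
    show "E' = length u \<or> nth1 u (Suc E') \<noteq> nth1 u (Suc E' - Dw u i)" using bru Du by simp
  qed
  have R: "Rw u i = Rw v i" using S Eu by (simp add: Rw_def E'_def)
  have run: "is_run u (Rw v i) = is_run v (Rw v i)"
    unfolding u_def Rw_def using is_run_app[where E="Ew v i" and v=v and S="Sw v i" and u="[a]"] E by simp
  have "(Ew v i < length v \<and> Sw v i > 1 \<and> \<not> is_run v (Rw v i)) \<or>
        (Ew v i < length v \<and> is_run v (Rw v i) \<and> i + Dw v i \<le> Ew v i)"
    using lv E unfolding lost_def by auto
  hence "(Ew u i < length u \<and> Sw u i > 1 \<and> \<not> is_run u (Rw u i)) \<or>
        (Ew u i < length u \<and> is_run u (Rw u i) \<and> i + Dw u i \<le> Ew u i)"
    using R run S Eu Du E by (auto simp: u_def E'_def D_def)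
  thus ?thesis unfolding lost_def u_def[symmetric] using i1u i by auto
qed

lemma least_period_root:
  assumes S: "1 \<le> S" and E: "E \<le> length w" and D: "0 < D" and pr: "per w D S E"
    and x: "S \<le> x" "x + D \<le> Suc E" and ly: "lyndon c (fac w x (x + D - 1))"
  shows "least_period (fac w S E) = D"
  unfolding least_period_def
proof (rule Least_equality)
  show "is_period (fac w S E) D" using is_period_fac[OF S E] pr D by simp
  fix q assume q: "is_period (fac w S E) q"
  hence q1: "1 \<le> q" "per w q S E" using is_period_fac[OF S E] by auto
  show "D \<le> q"
  proof (rule ccontr)
    assume "\<not> D \<le> q"
    hence "q < D" by simp
    moreover have "per w q x (x + D - 1)" using per_sub[OF q1(2)] x by simp
    moreover have "x + D - 1 \<le> length w" using x E by simp
    moreover have "1 \<le> x" using x S by simp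
    ultimately show False using lyndon_fac_not_per[OF _ _ ly, of q] q1 x D by simp
  qed
qed

definition runctx :: "bool list \<Rightarrow> nat \<Rightarrow> nat \<Rightarrow> nat \<Rightarrow> bool" where
  "runctx w S E D \<longleftrightarrow> 1 \<le> S \<and> E \<le> length w \<and> 1 \<le> D \<and> per w D S E \<and> 2 * D \<le> E - S + 1 \<and>
     (S = 1 \<or> nth1 w (S - 1) \<noteq> nth1 w (S - 1 + D)) \<and> least_period (fac w S E) = D"

lemma RX1:
  assumes rc: "runctx w S E D" and j: "2 \<le> j" "j \<le> length w" and R: "Rw w j = (S, E)"
  shows "Dw w j = D \<and> Lw w j = j + D - 1 \<and> S \<le> j"
proof -
  have j1: "1 \<le> j" "j \<le> length w" using j by auto
  have SE: "Sw w j = S" "Ew w j = E" using R by (auto simp: Rw_def)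
  define Dj where "Dj = Dw w j"
  have L: "Lw w j = j + Dj - 1" "1 \<le> Dj" using LDE[OF j1] by (auto simp: Dj_def)
  have p1: "per w Dj S (Lw w j)" using LDE(9)[OF j1] SE by (simp add: Dj_def)
  have p2: "per w Dj j E" using LDE(13)[OF j1] SE by (simp add: Dj_def)
  have Sj: "S \<le> j" using LDE(8)[OF j1] SE by simp
  have p: "per w Dj S E" using per_combine[OF p1 p2] L by simp
  have rc': "1 \<le> S" "E \<le> length w" "least_period (fac w S E) = D" "per w D S E"
    using rc unfolding runctx_def by auto
  have "is_period (fac w S E) Dj" using is_period_fac[OF rc'(1,2)] p L by simp
  hence DDj: "D \<le> Dj" using rc'(3) unfolding least_period_def by (metis Least_le)
  have "Dj = D"
  proof (rule ccontr)
    assume "Dj \<noteq> D"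
    hence "D < Dj" using DDj by simp
    moreover have "per w D j (Lw w j)" using per_sub[OF rc'(4) Sj] LDE(11)[OF j1] SE by simp
    moreover have "0 < D" using rc unfolding runctx_def by simp
    ultimately show False using lyndon_fac_not_per[OF j1(1) LDE(4)[OF j1] LDE(5)[OF j1], of D] L by simp
  qed
  thus ?thesis using L Sj by (simp add: Dj_def)
qed

lemma RY:
  assumes rc: "runctx w S E D" and x: "S < x" "x + D \<le> Suc E" and D2: "2 \<le> D"
    and ly: "lyndon c (fac w x (x + D - 1))"
    and HB: "E = length w \<or> (nth1 w (Suc E) = c \<and> nth1 w (Suc E - D) = (\<not> c))"
  shows "cw w x = c \<and> Lw w x = x + D - 1 \<and> Dw w x = D \<and> Sw w x = S \<and> Ew w x = E"
proof -
  have rc': "1 \<le> S" "E \<le> length w" "per w D S E" "S = 1 \<or> nth1 w (S - 1) \<noteq> nth1 w (S - 1 + D)"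
    using rc unfolding runctx_def by auto
  have x1: "1 \<le> x" "x \<le> length w" using x rc' D2 by auto
  have last: "nth1 w (x + D - 1) = (\<not> c)"
    using lyndon_fac_first_last[OF x1(1) _ _ ly] x rc' D2 by simp
  have "S \<le> x - 1" "x - 1 + D \<le> E" using x by auto
  hence "nth1 w (x - 1 + D) = nth1 w (x - 1)" using rc'(3) unfolding per_def by blast
  moreover have "x - 1 + D = x + D - 1" using x by simp
  ultimately have "nth1 w (x - 1) = (\<not> c)" using last by simp
  hence cwx: "cw w x = c" unfolding cw_def by simp
  have Lx: "Lw w x = x + D - 1"
  proof (rule Lw_eq[OF x1(1)])
    show "x \<le> x + D - 1" "x + D - 1 \<le> length w" using x D2 rc' by auto
    show "lyndon (cw w x) (fac w x (x + D - 1))" using ly cwx by simp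
    show "\<forall>j. x + D - 1 < j \<and> j \<le> length w \<longrightarrow> \<not> lyndon (cw w x) (fac w x j)"
    proof (intro allI impI notI)
      fix j assume j: "x + D - 1 < j \<and> j \<le> length w" and lj: "lyndon (cw w x) (fac w x j)"
      show False
      proof (cases "j \<le> E")
        case True
        have "per w D x j" using per_sub[OF rc'(3)] x True by simp
        moreover have "D < Suc j - x" using j D2 by arith
        ultimately show False using lyndon_fac_not_per[OF x1(1) _ lj, of D] j D2 by simp
      next
        case False
        hence "E \<noteq> length w" using j by simp
        hence br: "nth1 w (Suc E) = c" "nth1 w (Suc E - D) = (\<not> c)" using HB by auto
        have "\<not> lyndon c (fac w x j)"
        proof (rule lyndon_fac_break_smaller[OF x1(1) _ per_sub[OF rc'(3)] _ _ _ br])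
          show "j \<le> length w" "S \<le> x" "E \<le> E" "0 < D" "x + D \<le> Suc E" "Suc E \<le> j" using j x D2 False by auto
        qed
        thus False using lj cwx by simp
      qed
    qed
  qed
  have Dx: "Dw w x = D" using Lx x D2 by (simp add: Dw_def)
  have Sx: "Sw w x = S"
  proof (rule Sw_eq[OF x1])
    show "1 \<le> S" "S \<le> x" using rc' x by auto
    show "per w (Dw w x) S (Lw w x)" using per_sub[OF rc'(3)] Lx Dx x by simp
    show "S = 1 \<or> nth1 w (S - 1) \<noteq> nth1 w (S - 1 + Dw w x)" using rc' Dx by simp
  qed
  have Ex: "Ew w x = E"
  proof (rule Ew_eq[OF x1])
    show "Lw w x \<le> E" "E \<le> length w" using Lx x rc' by auto
    show "per w (Dw w x) x E" using per_sub[OF rc'(3)] Dx x by simp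
    show "E = length w \<or> nth1 w (Suc E) \<noteq> nth1 w (Suc E - Dw w x)" using HB Dx by auto
  qed
  show ?thesis using cwx Lx Dx Sx Ex by simp
qed




lemma Inf_nat_le: "(x::nat) \<in> A \<Longrightarrow> Inf A \<le> x"
  by (simp add: Inf_nat_def Least_le)

lemma per_extend:
  assumes p: "per w D s e" and b: "nth1 w (Suc e) = nth1 w (Suc e - D)" and sD: "s + D \<le> Suc e"
  shows "per w D s (Suc e)"
  unfolding per_def
proof (intro allI impI)
  fix k assume k: "s \<le> k \<and> k + D \<le> Suc e"
  show "nth1 w (k + D) = nth1 w k"
  proof (cases "k + D = Suc e")
    case True
    hence "k = Suc e - D" by simp
    thus ?thesis using b True by simp
  next
    case False hence "k + D \<le> e" using k by simp
    thus ?thesis using p k unfolding per_def by blast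
  qed
qed

lemma ctx3:
  assumes i: "2 \<le> i" "i \<le> length v" and E: "Ew v i = length v" and run: "is_run v (Rw v i)"
    and iD: "i + Dw v i \<le> Ew v i" and Si: "Sw v i < i"
  shows "runctx v (Sw v i) (length v) (Dw v i)"
proof -
  have i1: "1 \<le> i" "i \<le> length v" using i by auto
  note L = LDE[OF i1]
  have p: "per v (Dw v i) (Sw v i) (length v)"
    using per_combine[OF L(9) L(13)] L(1) E by simp
  have lp: "least_period (fac v (Sw v i) (length v)) = Dw v i"
  proof (rule least_period_root[OF L(7) _ _ p])
    show "length v \<le> length v" by simp
    show "0 < Dw v i" using L(2) by simp
    show "Sw v i \<le> i" "i + Dw v i \<le> Suc (length v)" using L(8) iD E by auto
    show "lyndon (cw v i) (fac v i (i + Dw v i - 1))" using L(5) L(1) by simp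
  qed
  have r: "is_run v (Sw v i, length v)" using run E by (simp add: Rw_def)
  have eq: "Sw v i - 1 + Dw v i = Sw v i + Dw v i - 1" using L(7) by simp
  show ?thesis unfolding runctx_def using L(7) L(2) p lp r[unfolded is_run_iff] eq by simp
qed

lemma rc_facts:
  assumes "runctx w S E D"
  shows "1 \<le> S" "E \<le> length w" "1 \<le> D" "per w D S E" "2 * D \<le> E - S + 1"
    "S = 1 \<or> nth1 w (S - 1) \<noteq> nth1 w (S - 1 + D)" "least_period (fac w S E) = D"
  using assms unfolding runctx_def by auto

lemma fw_2a_rw:
  assumes rc: "runctx v S (length v) D" and ru: "runctx (v @ [a]) S (Suc (length v)) D" and D2: "2 \<le> D"
  shows "rw (v @ [a]) (S, Suc (length v)) c = rw v (S, length v) c"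
proof -
  define n where "n = length v"
  define u where "u = v @ [a]"
  have lu: "length u = Suc n" by (simp add: u_def n_def)
  note R = rc_facts[OF rc[folded n_def]]
  note RU = rc_facts[OF ru[folded n_def u_def]]
  define Av where "Av = {i. 1 < i \<and> i \<le> length v \<and> Rw v i = (S, n) \<and> lyndon c (fac v i (Lw v i))}"
  define Au where "Au = {i. 1 < i \<and> i \<le> length u \<and> Rw u i = (S, Suc n) \<and> lyndon c (fac u i (Lw u i))}"
  have sub: "Av \<subseteq> Au"
  proof
    fix j assume "j \<in> Av"
    hence j: "2 \<le> j" "j \<le> n" "Rw v j = (S, n)" "lyndon c (fac v j (Lw v j))" by (auto simp: Av_def n_def)
    have j1: "1 \<le> j" "j \<le> length v" using j by (auto simp: n_def)
    have X: "Dw v j = D" "Lw v j = j + D - 1" "S \<le> j" using RX1[OF rc j(1) j1(2)] j(3) by (auto simp: n_def)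
    have Lvn: "Lw v j \<le> n" using LDE(4)[OF j1] by (simp add: n_def)
    have nl: "\<not> lyndon (cw v j) (fac u j (Suc n))"
    proof
      assume ly: "lyndon (cw v j) (fac u j (Suc n))"
      have "per u D j (Suc n)" using per_sub[OF RU(4) X(3)] by simp
      moreover have "D < Suc (Suc n) - j" using X Lvn R by linarith
      ultimately show False using lyndon_fac_not_per[OF j1(1) _ ly, of D] lu R by simp
    qed
    have Lu: "Lw u j = Lw v j" using Lw_app[OF j(1) j1(2) nl[unfolded u_def n_def]] by (simp add: u_def)
    have Su: "Sw u j = Sw v j" using Sw_app[OF j1(1) Lu[unfolded u_def]] Lvn by (simp add: u_def n_def)
    have Du: "Dw u j = D" using Lu X by (simp add: Dw_def)
    have Eu: "Ew u j = Suc n"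
    proof (rule Ew_eq)
      show "1 \<le> j" "j \<le> length u" using j lu by auto
      show "Lw u j \<le> Suc n" "Suc n \<le> length u" using Lu Lvn lu by auto
      show "per u (Dw u j) j (Suc n)" using per_sub[OF RU(4) X(3)] Du by simp
      show "Suc n = length u \<or> nth1 u (Suc (Suc n)) \<noteq> nth1 u (Suc (Suc n) - Dw u j)" using lu by simp
    qed
    have "fac u j (Lw u j) = fac v j (Lw v j)" using Lu fac_eq_app[of j "Lw v j" v "[a]"] j1 Lvn by (simp add: u_def n_def)
    thus "j \<in> Au" using j Su Eu lu X(1) j(3) unfolding Au_def by (auto simp: Rw_def)
  qed
  have bk: "m \<in> Av \<or> (m - D \<in> Au \<and> m - D < m)" if mA: "m \<in> Au" for m
  proof -
    have m: "2 \<le> m" "m \<le> Suc n" "Rw u m = (S, Suc n)" "lyndon c (fac u m (Lw u m))" using mA by (auto simp: Au_def lu)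
    have m1: "1 \<le> m" "m \<le> length u" using m lu by auto
    have X: "Dw u m = D" "Lw u m = m + D - 1" "S \<le> m" using RX1[OF ru[folded n_def u_def] m(1) m1(2)] m(3) by auto
    have Lum: "Lw u m \<le> Suc n" using LDE(4)[OF m1] lu by simp
    show ?thesis
    proof (cases "m + D - 1 \<le> n")
      case True
      have mn: "m \<le> length v" using True R by (simp add: n_def)
      have Lv: "Lw v m = Lw u m" using Lw_app2[OF m(1) mn, of a] True X by (simp add: u_def n_def)
      have Sv: "Sw u m = Sw v m" using Sw_app[OF m1(1), of v "[a]"] Lv True X by (simp add: u_def n_def)
      have Dv: "Dw v m = D" using Lv X by (simp add: Dw_def)
      have Ev: "Ew v m = n"
      proof (rule Ew_eq)
        show "1 \<le> m" "m \<le> length v" using m1 mn by auto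
        show "Lw v m \<le> n" "n \<le> length v" using Lv X True by (auto simp: n_def)
        show "per v (Dw v m) m n" using per_sub[OF R(4) X(3)] Dv by simp
        show "n = length v \<or> nth1 v (Suc n) \<noteq> nth1 v (Suc n - Dw v m)" by (simp add: n_def)
      qed
      have "fac u m (Lw u m) = fac v m (Lw v m)" using Lv fac_eq_app[of m "Lw v m" v "[a]"] m1 True X by (simp add: u_def n_def)
      hence "m \<in> Av" using m mn Sv Ev Dv m(3) unfolding Av_def by (auto simp: Rw_def)
      thus ?thesis by simp
    next
      case False
      hence mD: "m + D - 1 = Suc n" using Lum X by simp
      define m' where "m' = m - D"
      have m'1: "S < m'" using mD R by (simp add: m'_def)
      have mm: "m = m' + D" using mD R unfolding m'_def by linarith
      have root: "fac u m' (m' + D - 1) = fac u m (m + D - 1)"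
      proof (rule fac_same_root[OF RU(4)])
        show "0 < D" "1 \<le> S" "Suc n \<le> length u" using R lu by auto
        show "S \<le> m'" "m' + D \<le> Suc (Suc n)" "S \<le> m" "m + D \<le> Suc (Suc n)" using m'1 mm mD X by auto
        show "m' mod D = m mod D" using mm by simp
      qed
      have lym: "lyndon (cw u m) (fac u m (m + D - 1))" using LDE(5)[OF m1] X by simp
      have Y: "cw u m' = cw u m \<and> Lw u m' = m' + D - 1 \<and> Dw u m' = D \<and> Sw u m' = S \<and> Ew u m' = Suc n"
      proof (rule RY[OF ru[folded n_def u_def] m'1 _ D2])
        show "m' + D \<le> Suc (Suc n)" using mm mD by simp
        show "lyndon (cw u m) (fac u m' (m' + D - 1))" using root lym by simp
        show "Suc n = length u \<or> (nth1 u (Suc (Suc n)) = cw u m \<and> nth1 u (Suc (Suc n) - D) = (\<not> cw u m))" using lu by simp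
      qed
      have "lyndon c (fac u m' (Lw u m'))" using Y root m(4) X by simp
      moreover have "1 < m'" "m' \<le> length u" using m'1 R mm m lu by auto
      ultimately have "m' \<in> Au" using Y unfolding Au_def by (simp add: Rw_def)
      moreover have "m' < m" using mm R by simp
      ultimately show ?thesis by (simp add: m'_def)
    qed
  qed
  have "Inf Au = Inf Av"
  proof (cases "Au = {}")
    case True thus ?thesis using sub by auto
  next
    case False
    define m where "m = Inf Au"
    have mA: "m \<in> Au" using Inf_nat_def1[OF False] by (simp add: m_def)
    have mmin: "m \<le> y" if "y \<in> Au" for y using Inf_nat_le[OF that] by (simp add: m_def)
    have "m \<in> Av" using bk[OF mA] mmin by fastforce
    hence "Av \<noteq> {}" by auto
    hence "Inf Av \<in> Av" by (rule Inf_nat_def1)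
    hence "m \<le> Inf Av" using sub mmin by auto
    moreover have "Inf Av \<le> m" using Inf_nat_le[OF \<open>m \<in> Av\<close>] .
    ultimately show ?thesis by (simp add: m_def)
  qed
  thus ?thesis unfolding rw_def Av_def Au_def u_def n_def by simp
qed

lemma fw_2a:
  assumes rc: "runctx v S (length v) D" and ru: "runctx (v @ [a]) S (Suc (length v)) D"
  shows "fw (v @ [a]) (S, Suc (length v)) = fw v (S, length v)"
proof (cases "D = 1")
  case True thus ?thesis using rc_facts(7)[OF rc] rc_facts(7)[OF ru] by (simp add: fw_def)
next
  case False
  hence D2: "2 \<le> D" using rc_facts(3)[OF rc] by simp
  show ?thesis using rc_facts(7)[OF rc] rc_facts(7)[OF ru] fw_2a_rw[OF rc ru D2] False by (simp add: fw_def)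
qed

lemma case2a:
  assumes i: "2 \<le> i" "i \<le> length v" and E: "Ew v i = length v" and run: "is_run v (Rw v i)"
    and iD: "i + Dw v i \<le> Ew v i" and Si: "Sw v i < i"
    and lyf: "lyndon (fw v (Rw v i)) (fac v i (Lw v i))"
    and ab: "a = nth1 v (Suc (length v) - Dw v i)"
  shows "lost (v @ [a]) i"
proof -
  define n where "n = length v"
  define u where "u = v @ [a]"
  define S where "S = Sw v i"
  define D where "D = Dw v i"
  have lu: "length u = Suc n" by (simp add: u_def n_def)
  have i1: "1 \<le> i" "i \<le> length v" using i by auto
  note L = LDE[OF i1]
  have rc: "runctx v S n D" using ctx3[OF i E run iD Si] by (simp add: S_def D_def n_def)
  note R = rc_facts[OF rc]
  have Dn: "D \<le> n" using R by linarith
  have pu0: "per u D S n" using per_app[OF R(4)] R by (simp add: u_def n_def)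
  have bu: "nth1 u (Suc n) = nth1 u (Suc n - D)"
  proof -
    have "nth1 u (Suc n - D) = nth1 v (Suc n - D)" unfolding u_def using Dn R by (intro nth1_app) (auto simp: n_def)
    moreover have "nth1 u (Suc n) = a" by (simp add: u_def n_def nth1_app_last)
    ultimately show ?thesis using ab by (simp add: n_def D_def)
  qed
  have pu: "per u D S (Suc n)" using per_extend[OF pu0 bu] R by linarith
  have lyroot: "lyndon (cw v i) (fac v i (i + D - 1))" using L(5) L(1) by (simp add: D_def)
  have iDn: "i + D \<le> n" using iD E by (simp add: D_def n_def)
  have facu: "fac u i (i + D - 1) = fac v i (i + D - 1)" unfolding u_def using i1 iDn by (intro fac_eq_app) (auto simp: n_def)
  have lpu: "least_period (fac u S (Suc n)) = D"
  proof (rule least_period_root[OF R(1) _ _ pu])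
    show "Suc n \<le> length u" "0 < D" using lu R by auto
    show "S \<le> i" "i + D \<le> Suc (Suc n)" using Si iDn by (auto simp: S_def)
    show "lyndon (cw v i) (fac u i (i + D - 1))" using lyroot facu by simp
  qed
  have lbu: "S = 1 \<or> nth1 u (S - 1) \<noteq> nth1 u (S - 1 + D)"
  proof (cases "S = 1")
    case False
    have "nth1 u (S - 1) = nth1 v (S - 1)" unfolding u_def using False R Si i by (intro nth1_app) (auto simp: S_def)
    moreover have "nth1 u (S - 1 + D) = nth1 v (S - 1 + D)" unfolding u_def using False R Si iDn by (intro nth1_app) (auto simp: S_def n_def)
    ultimately show ?thesis using R by simp
  qed simp
  have ru: "runctx u S (Suc n) D" unfolding runctx_def using R lu pu lpu lbu by auto
  have nl: "\<not> lyndon (cw v i) (fac u i (Suc n))"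
  proof
    assume ly: "lyndon (cw v i) (fac u i (Suc n))"
    have "per u D i (Suc n)" using per_sub[OF pu] Si by (simp add: S_def)
    moreover have "D < Suc (Suc n) - i" using iDn by simp
    ultimately show False using lyndon_fac_not_per[OF i1(1) _ ly, of D] lu R by simp
  qed
  have Lu: "Lw u i = Lw v i" using Lw_app[OF i nl[unfolded u_def n_def]] by (simp add: u_def)
  have Su: "Sw u i = S" using Sw_app[OF i1(1) Lu[unfolded u_def]] L(4) by (simp add: u_def S_def)
  have Du: "Dw u i = D" using Lu by (simp add: Dw_def D_def)
  have Eu: "Ew u i = Suc n"
  proof (rule Ew_eq)
    show "1 \<le> i" "i \<le> length u" using i lu by (auto simp: n_def)
    show "Lw u i \<le> Suc n" "Suc n \<le> length u" using Lu L(4) lu by (auto simp: n_def)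
    show "per u (Dw u i) i (Suc n)" using per_sub[OF pu] Du Si by (simp add: S_def)
    show "Suc n = length u \<or> nth1 u (Suc (Suc n)) \<noteq> nth1 u (Suc (Suc n) - Dw u i)" using lu by simp
  qed
  have runu: "is_run u (S, Suc n)"
    unfolding is_run_iff using R lu lpu lbu Si i by (auto simp: S_def n_def)
  have fwe: "fw u (S, Suc n) = fw v (S, n)" using fw_2a[OF rc[unfolded n_def] ru[unfolded u_def n_def]] by (simp add: u_def n_def)
  have "lyndon (fw u (Rw u i)) (fac u i (Lw u i))"
  proof -
    have "fac u i (Lw u i) = fac v i (Lw v i)" using Lu fac_eq_app[of i "Lw v i" v "[a]"] i1 L(4) by (simp add: u_def)
    moreover have "Rw u i = (S, Suc n)" "Rw v i = (S, n)" using Su Eu E by (auto simp: Rw_def S_def n_def)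
    ultimately show ?thesis using lyf fwe by simp
  qed
  moreover have "Rw u i = (S, Suc n)" using Su Eu by (simp add: Rw_def)
  ultimately show ?thesis unfolding lost_def u_def[symmetric] using runu Eu lu Du Su i iDn Si
    by (auto simp: S_def)
qed

lemma run_break_u:
  assumes rc: "runctx v S (length v) D" and ab: "a \<noteq> nth1 v (Suc (length v) - D)"
  shows "is_run (v @ [a]) (S, length v)"
proof -
  define n where "n = length v"
  define u where "u = v @ [a]"
  note R = rc_facts[OF rc[folded n_def]]
  have Dn: "D \<le> n" "S < n" using R by linarith+
  have f: "fac u S n = fac v S n" unfolding u_def using R by (intro fac_eq_app) (auto simp: n_def)
  have lbu: "S = 1 \<or> nth1 u (S - 1) \<noteq> nth1 u (S - 1 + D)"
  proof (cases "S = 1")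
    case False
    have "nth1 u (S - 1) = nth1 v (S - 1)" unfolding u_def using False R Dn by (intro nth1_app) (auto simp: n_def)
    moreover have "nth1 u (S - 1 + D) = nth1 v (S - 1 + D)" unfolding u_def using False R Dn by (intro nth1_app) (auto simp: n_def)
    ultimately show ?thesis using R by simp
  qed simp
  have "nth1 u (Suc n - D) = nth1 v (Suc n - D)" unfolding u_def using Dn R by (intro nth1_app) (auto simp: n_def)
  moreover have "nth1 u (Suc n) = a" by (simp add: u_def n_def nth1_app_last)
  ultimately have rb: "nth1 u (n + 1) \<noteq> nth1 u (n + 1 - D)" using ab by (simp add: n_def)
  have "is_run u (S, n)" unfolding is_run_iff f using R Dn lbu rb by (auto simp: u_def n_def)
  thus ?thesis by (simp add: u_def n_def)
qed

lemma case2b_alpha: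
  assumes i: "2 \<le> i" "i \<le> length v" and E: "Ew v i = length v" and run: "is_run v (Rw v i)"
    and iD: "i + Dw v i \<le> Ew v i" and Si: "Sw v i < i"
    and ab: "a \<noteq> nth1 v (Suc (length v) - Dw v i)" and ac: "a = cw v i"
  shows "lost (v @ [a]) i"
proof -
  define n where "n = length v"
  define u where "u = v @ [a]"
  define S where "S = Sw v i"
  define D where "D = Dw v i"
  define c where "c = cw v i"
  have lu: "length u = Suc n" by (simp add: u_def n_def)
  have i1: "1 \<le> i" "i \<le> length v" using i by auto
  note L = LDE[OF i1]
  have rc: "runctx v S n D" using ctx3[OF i E run iD Si] by (simp add: S_def D_def n_def)
  note R = rc_facts[OF rc]
  have Dn: "D \<le> n" using R by linarith
  have iDn: "i + D \<le> n" using iD E by (simp add: D_def n_def)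
  have bu: "nth1 u (Suc n) = c" "nth1 u (Suc n - D) = (\<not> c)"
  proof -
    have "nth1 u (Suc n - D) = nth1 v (Suc n - D)" unfolding u_def using Dn R by (intro nth1_app) (auto simp: n_def)
    moreover have "nth1 u (Suc n) = a" by (simp add: u_def n_def nth1_app_last)
    ultimately show "nth1 u (Suc n) = c" "nth1 u (Suc n - D) = (\<not> c)" using ab ac by (auto simp: n_def D_def c_def)
  qed
  have piu: "per u D i n" using per_app[OF per_sub[OF R(4)]] R Si by (simp add: u_def n_def S_def)
  have nl: "\<not> lyndon (cw v i) (fac u i (Suc n))"
    unfolding c_def[symmetric]
  proof (rule lyndon_fac_break_smaller[OF i1(1) _ piu _ _ _ bu])
    show "Suc n \<le> length u" "0 < D" "i + D \<le> Suc n" "Suc n \<le> Suc n" using lu R iDn by auto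
  qed
  have Lu: "Lw u i = Lw v i" using Lw_app[OF i nl[unfolded u_def n_def]] by (simp add: u_def)
  have Su: "Sw u i = S" using Sw_app[OF i1(1) Lu[unfolded u_def]] L(4) by (simp add: u_def S_def)
  have Du: "Dw u i = D" using Lu by (simp add: Dw_def D_def)
  have Eu: "Ew u i = n"
  proof (rule Ew_eq)
    show "1 \<le> i" "i \<le> length u" using i lu by (auto simp: n_def)
    show "Lw u i \<le> n" "n \<le> length u" using Lu L(4) lu by (auto simp: n_def)
    show "per u (Dw u i) i n" using piu Du by simp
    show "n = length u \<or> nth1 u (Suc n) \<noteq> nth1 u (Suc n - Dw u i)" using bu Du by simp
  qed
  have runu: "is_run u (S, n)" using run_break_u[OF rc[unfolded n_def] ab[folded D_def]] by (simp add: u_def n_def)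
  have "Rw u i = (S, n)" using Su Eu by (simp add: Rw_def)
  thus ?thesis unfolding lost_def u_def[symmetric] using runu Eu lu Du i iDn by auto
qed

definition gpos :: "bool list \<Rightarrow> nat \<Rightarrow> nat" where
  "gpos v i = rw v (Rw v i) (\<not> fw v (Rw v i)) + (i - rw v (Rw v i) (fw v (Rw v i)))"

lemma case2b_beta:
  assumes i: "2 \<le> i" "i \<le> length v" and E: "Ew v i = length v" and run: "is_run v (Rw v i)"
    and iD: "i + Dw v i \<le> Ew v i" and Si: "Sw v i < i"
    and lyf: "lyndon (fw v (Rw v i)) (fac v i (Lw v i))"
    and ab: "a \<noteq> nth1 v (Suc (length v) - Dw v i)" and ac: "a \<noteq> cw v i"
  shows "2 \<le> gpos v i \<and> gpos v i \<le> i \<and> lost (v @ [a]) (gpos v i) \<and> \<not> lost v (gpos v i) \<and> Rw v (gpos v i) = Rw v i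
    \<and> rw v (Rw v i) (fw v (Rw v i)) \<le> i"
proof -
  define n where "n = length v"
  define u where "u = v @ [a]"
  define S where "S = Sw v i"
  define D where "D = Dw v i"
  define c where "c = cw v i"
  define f where "f = fw v (S, n)"
  have lu: "length u = Suc n" by (simp add: u_def n_def)
  have i1: "1 \<le> i" "i \<le> length v" using i by auto
  note L = LDE[OF i1]
  have Ri: "Rw v i = (S, n)" using E by (simp add: Rw_def S_def n_def)
  have rc: "runctx v S n D" using ctx3[OF i E run iD Si] by (simp add: S_def D_def n_def)
  note R = rc_facts[OF rc]
  have Dn: "D \<le> n" using R by linarith
  have iDn: "i + D \<le> n" using iD E by (simp add: D_def n_def)
  have Lv: "Lw v i = i + D - 1" using L(1) by (simp add: D_def)
  define b where "b = nth1 v (Suc n - D)"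
  have bc: "b = c" using ab ac by (cases a; cases b; cases c) (auto simp: b_def c_def D_def n_def)
  have D2: "2 \<le> D"
  proof (rule ccontr)
    assume "\<not> 2 \<le> D"
    hence D1: "D = 1" using R by simp
    have "nth1 v n = nth1 v (i - 1)"
      by (rule per_mod_eq[OF R(4)]) (use D1 Si i iDn in \<open>auto simp: S_def\<close>)
    moreover have "b = nth1 v n" using D1 by (simp add: b_def)
    ultimately have "b = (\<not> c)" by (simp add: c_def cw_def)
    thus False using bc by simp
  qed
  have iL: "i < Lw v i" using Lv D2 by simp
  have fc: "f = c"
  proof -
    have "nth1 v i = f" using lyndon_fac_first_last[OF i1(1) L(4) iL] lyf Ri by (simp add: f_def)
    moreover have "nth1 v i = c" using lyndon_fac_first_last[OF i1(1) L(4) iL L(5)] by (simp add: c_def)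
    ultimately show ?thesis by simp
  qed
  define A where "A c' = {j. 1 < j \<and> j \<le> length v \<and> Rw v j = (S, n) \<and> lyndon c' (fac v j (Lw v j))}" for c'
  have rwA: "rw v (S, n) c' = Inf (A c')" for c' unfolding rw_def A_def ..
  have frel: "Inf (A (\<not> f)) \<le> Inf (A f)"
  proof -
    have "f = (if rw v (S, n) False \<ge> rw v (S, n) True then False else True)"
      using R D2 by (simp add: f_def fw_def)
    thus ?thesis using rwA by (cases "rw v (S, n) False \<ge> rw v (S, n) True") auto
  qed
  have iA: "i \<in> A f" using i Ri lyf unfolding A_def f_def by simp
  define rf where "rf = Inf (A f)"
  have rfA: "rf \<in> A f" using Inf_nat_def1[of "A f"] iA by (auto simp: rf_def)
  have rfi: "rf \<le> i" using Inf_nat_le[OF iA] by (simp add: rf_def)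
  define U where "U = fac v i (i + D - 1)"
  have lU: "length U = D" using i1 iDn R by (simp add: U_def fac_len)
  have lyU: "lyndon f U" using lyf Ri Lv by (simp add: U_def f_def)
  have primU: "\<forall>m. 0 < m \<and> m < length U \<longrightarrow> rotate m U \<noteq> U" using lyndon_rot[OF lyU] by blast
  obtain k where k: "k < length U" "lyndon (\<not> f) (rotate k U)"
    using lyndon_conj_exists[OF _ primU] lU D2 by fastforce
  define x where "x = (if S + 1 + D \<le> i + k then i + k - D else i + k)"
  have xS: "S < x" and xD: "x + D \<le> Suc n"
    using k lU R Si iDn unfolding x_def S_def by (auto split: if_splits)
  have rootx: "fac v x (x + D - 1) = rotate k U"
  proof (cases "S + 1 + D \<le> i + k")
    case True
    hence xx: "x = i + k - D" by (simp add: x_def)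
    have "fac v i (i + D - 1) = rotate (i - x) (fac v x (x + D - 1))"
      by (rule fac_rot[OF R(4)]) (use R xS xx k lU iDn in \<open>auto simp: n_def\<close>)
    moreover have "i - x = D - k" using xx k lU True by simp
    ultimately have "rotate k U = rotate k (rotate (D - k) (fac v x (x + D - 1)))" by (simp add: U_def)
    also have "\<dots> = rotate D (fac v x (x + D - 1))" using k lU by (simp add: rotate_rotate)
    also have "\<dots> = fac v x (x + D - 1)" using xS xD R by (intro rotate_id) (simp add: fac_len n_def)
    finally show ?thesis by simp
  next
    case False
    hence xx: "x = i + k" by (simp add: x_def)
    have "fac v x (x + D - 1) = rotate (x - i) (fac v i (i + D - 1))"
      by (rule fac_rot[OF R(4)]) (use R xS xx xD Si in \<open>auto simp: n_def S_def\<close>)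
    thus ?thesis using xx by (simp add: U_def)
  qed
  have Yx: "cw v x = (\<not> f) \<and> Lw v x = x + D - 1 \<and> Dw v x = D \<and> Sw v x = S \<and> Ew v x = n"
    by (rule RY[OF rc xS xD D2]) (use rootx k in \<open>auto simp: n_def\<close>)
  have xA: "x \<in> A (\<not> f)"
  proof -
    have "1 < x" "x \<le> length v" using xS xD R D2 by (auto simp: n_def)
    thus ?thesis unfolding A_def using Yx rootx k by (simp add: Rw_def)
  qed
  define rn where "rn = Inf (A (\<not> f))"
  have rnA: "rn \<in> A (\<not> f)" using Inf_nat_def1[of "A (\<not> f)"] xA by (auto simp: rn_def)
  have rnrf: "rn \<le> rf" using frel by (simp add: rn_def rf_def)
  have rf2: "2 \<le> rf" "rf \<le> length v" "Rw v rf = (S, n)" "lyndon f (fac v rf (Lw v rf))" using rfA by (auto simp: A_def)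
  have rn2: "2 \<le> rn" "rn \<le> length v" "Rw v rn = (S, n)" "lyndon (\<not> f) (fac v rn (Lw v rn))" using rnA by (auto simp: A_def)
  have Xf: "Dw v rf = D" "Lw v rf = rf + D - 1" "S \<le> rf" using RX1[OF rc rf2(1,2)] rf2(3) by auto
  have Xn: "Dw v rn = D" "Lw v rn = rn + D - 1" "S \<le> rn" using RX1[OF rc rn2(1,2)] rn2(3) by auto
  have cong: "(i - rf) mod D = 0"
  proof -
    have "fac v i (i + D - 1) = rotate (i - rf) (fac v rf (rf + D - 1))"
      by (rule fac_rot[OF R(4)]) (use R Xf rfi iDn in \<open>auto simp: n_def\<close>)
    hence "lyndon f (rotate (i - rf) (fac v rf (rf + D - 1)))" using lyU by (simp add: U_def)
    hence "rotate (i - rf) (fac v rf (rf + D - 1)) = fac v rf (rf + D - 1)"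
      using lyndon_conj_unique rf2(4) Xf by simp
    hence "(i - rf) mod length (fac v rf (rf + D - 1)) = 0"
      using lyndon_primitive rf2(4) Xf by simp
    moreover have "length (fac v rf (rf + D - 1)) = D" using Xf R rfi iDn by (simp add: fac_len n_def)
    ultimately show ?thesis by simp
  qed
  define j where "j = rn + (i - rf)"
  have gj: "gpos v i = j" unfolding gpos_def j_def rn_def rf_def using Ri rwA by (simp add: f_def)
  have ji: "j \<le> i" "2 \<le> j" "j + D \<le> n" "rn \<le> j" using rnrf rfi rn2 iDn by (auto simp: j_def)
  have rootj: "fac v j (j + D - 1) = fac v rn (rn + D - 1)"
  proof (rule fac_same_root[OF R(4)])
    show "0 < D" "1 \<le> S" "n \<le> length v" using R by auto
    show "S \<le> j" "j + D \<le> Suc n" "S \<le> rn" "rn + D \<le> Suc n" using Xn ji by auto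
    show "j mod D = rn mod D" using cong unfolding j_def by (simp add: mod_add_right_eq[symmetric])
  qed
  have lyj: "lyndon (\<not> f) (fac v j (j + D - 1))" using rootj rn2(4) Xn by simp
  have j1: "1 \<le> j" "j \<le> length v" using ji by (auto simp: n_def)
  have Yj: "cw v j = (\<not> f) \<and> Lw v j = j + D - 1 \<and> Sw v j = S \<and> Ew v j = n"
  proof (cases "j = rn")
    case True
    have "rn < Lw v rn" using Xn D2 by simp
    moreover have r1: "1 \<le> rn" "rn \<le> length v" using rn2 by auto
    ultimately have "nth1 v rn = cw v rn" "nth1 v rn = (\<not> f)"
      using lyndon_fac_first_last[OF r1(1) LDE(4)[OF r1] _ LDE(5)[OF r1]]
        lyndon_fac_first_last[OF r1(1) LDE(4)[OF r1] _ rn2(4)] by auto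
    thus ?thesis using True Xn rn2(3) by (simp add: Rw_def)
  next
    case False
    hence "S < j" using Xn ji by simp
    thus ?thesis using RY[OF rc _ _ D2 lyj] ji by (simp add: n_def)
  qed
  have bu: "nth1 u (Suc n) = (\<not> f)" "nth1 u (Suc n - D) = (\<not> \<not> f)"
  proof -
    have "nth1 u (Suc n - D) = nth1 v (Suc n - D)" unfolding u_def using Dn R by (intro nth1_app) (auto simp: n_def)
    moreover have "nth1 u (Suc n) = a" by (simp add: u_def n_def nth1_app_last)
    ultimately show "nth1 u (Suc n) = (\<not> f)" "nth1 u (Suc n - D) = (\<not> \<not> f)"
      using ac bc fc by (auto simp: b_def c_def)
  qed
  have pju: "per u D j n" using per_app[OF per_sub[OF R(4)]] R Xn ji by (simp add: u_def n_def)
  have nl: "\<not> lyndon (cw v j) (fac u j (Suc n))"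
  proof -
    have "\<not> lyndon (\<not> f) (fac u j (Suc n))"
    proof (rule lyndon_fac_break_smaller[OF j1(1) _ pju _ _ _ bu])
      show "Suc n \<le> length u" "0 < D" "j + D \<le> Suc n" "Suc n \<le> Suc n" using lu R ji by auto
    qed
    thus ?thesis using Yj by simp
  qed
  have Lu: "Lw u j = Lw v j" using Lw_app[OF ji(2) j1(2) nl[unfolded u_def n_def]] by (simp add: u_def)
  have Su: "Sw u j = S" using Sw_app[OF j1(1) Lu[unfolded u_def]] LDE(4)[OF j1] Yj by (simp add: u_def)
  have Du: "Dw u j = D" using Lu Yj j1 D2 by (simp add: Dw_def)
  have Eu: "Ew u j = n"
  proof (rule Ew_eq)
    show "1 \<le> j" "j \<le> length u" using j1 lu by (auto simp: n_def)
    show "Lw u j \<le> n" "n \<le> length u" using Lu Yj ji lu by auto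
    show "per u (Dw u j) j n" using pju Du by simp
    show "n = length u \<or> nth1 u (Suc n) \<noteq> nth1 u (Suc n - Dw u j)" using bu Du by simp
  qed
  have runu: "is_run u (S, n)" using run_break_u[OF rc[unfolded n_def] ab[folded D_def]] by (simp add: u_def n_def)
  have lostu: "lost u j"
  proof -
    have "Rw u j = (S, n)" using Su Eu by (simp add: Rw_def)
    thus ?thesis unfolding lost_def using runu Eu lu Du ji by auto
  qed
  have Rj: "Rw v j = (S, n)" using Yj by (simp add: Rw_def)
  have nlost: "\<not> lost v j"
  proof
    assume "lost v j"
    hence "lyndon (fw v (Rw v j)) (fac v j (Lw v j))" using Yj unfolding lost_def by (auto simp: n_def)
    hence lf: "lyndon f (fac v j (j + D - 1))" using Rj Yj by (simp add: f_def)
    have "j < j + D - 1" using D2 by simp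
    moreover have "j + D - 1 \<le> length v" using ji by (simp add: n_def)
    ultimately have "nth1 v j = f" "nth1 v j = (\<not> f)"
      using lyndon_fac_first_last[OF j1(1) _ _ lf] lyndon_fac_first_last[OF j1(1) _ _ lyj] ji by (auto simp: n_def)
    thus False by simp
  qed
  have "rw v (Rw v i) (fw v (Rw v i)) = rf" using Ri rwA by (simp add: rf_def f_def)
  thus ?thesis using gj ji lostu nlost Rj Ri rfi by (simp add: u_def)
qed




definition gmap :: "bool list \<Rightarrow> bool \<Rightarrow> nat \<Rightarrow> nat" where
  "gmap v a i = (if Ew v i = length v \<and> a \<noteq> nth1 v (Suc (length v) - Dw v i) \<and> a \<noteq> cw v i then gpos v i else i)"

lemma lost_bounds: "lost w i \<Longrightarrow> 2 \<le> i \<and> i \<le> length w"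
  unfolding lost_def by auto

lemma lost_iii:
  assumes "lost v i" "Ew v i = length v"
  shows "is_run v (Rw v i)" "i + Dw v i \<le> Ew v i" "Sw v i < i" "lyndon (fw v (Rw v i)) (fac v i (Lw v i))"
  using assms unfolding lost_def by auto

lemma one_step_map:
  assumes l: "lost v i"
  shows "lost (v @ [a]) (gmap v a i) \<and> gmap v a i \<le> i"
proof -
  have i: "2 \<le> i" "i \<le> length v" using lost_bounds[OF l] by auto
  have i1: "1 \<le> i" "i \<le> length v" using i by auto
  show ?thesis
  proof (cases "Ew v i < length v")
    case True
    thus ?thesis using case1[OF i True l] by (simp add: gmap_def)
  next
    case False
    hence E: "Ew v i = length v" using LDE(12)[OF i1] by simp
    note c = lost_iii[OF l E]
    show ?thesis
    proof (cases "a = nth1 v (Suc (length v) - Dw v i)")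
      case True
      thus ?thesis using case2a[OF i E c(1) c(2) c(3) c(4) True] by (simp add: gmap_def)
    next
      case nb: False
      show ?thesis
      proof (cases "a = cw v i")
        case True
        thus ?thesis using case2b_alpha[OF i E c(1) c(2) c(3) nb True] nb by (simp add: gmap_def)
      next
        case False
        thus ?thesis using case2b_beta[OF i E c(1) c(2) c(3) c(4) nb False] nb E by (simp add: gmap_def)
      qed
    qed
  qed
qed

lemma one_step_inj: "inj_on (gmap v a) {i. lost v i}"
proof (rule inj_onI)
  fix i1 i2 assume l1: "i1 \<in> {i. lost v i}" and l2: "i2 \<in> {i. lost v i}" and g: "gmap v a i1 = gmap v a i2"
  have l1': "lost v i1" and l2': "lost v i2" using l1 l2 by auto
  define B where "B i \<longleftrightarrow> Ew v i = length v \<and> a \<noteq> nth1 v (Suc (length v) - Dw v i) \<and> a \<noteq> cw v i" for i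
  have beta: "2 \<le> gpos v i \<and> gpos v i \<le> i \<and> \<not> lost v (gpos v i) \<and> Rw v (gpos v i) = Rw v i
    \<and> rw v (Rw v i) (fw v (Rw v i)) \<le> i" if "lost v i" "B i" for i
  proof -
    have i: "2 \<le> i" "i \<le> length v" using lost_bounds[OF that(1)] by auto
    have E: "Ew v i = length v" using that(2) by (simp add: B_def)
    note c = lost_iii[OF that(1) E]
    have nb: "a \<noteq> nth1 v (Suc (length v) - Dw v i)" and ac: "a \<noteq> cw v i" using that(2) by (auto simp: B_def)
    show ?thesis using case2b_beta[OF i E c(1) c(2) c(3) c(4) nb ac] by blast
  qed
  have gm: "gmap v a i = (if B i then gpos v i else i)" for i by (simp add: gmap_def B_def)
  show "i1 = i2"
  proof (cases "B i1")
    case b1: True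
    show ?thesis
    proof (cases "B i2")
      case b2: True
      have R: "Rw v i1 = Rw v i2" using beta[OF l1' b1] beta[OF l2' b2] g gm b1 b2 by metis
      have "gpos v i1 = gpos v i2" using g gm b1 b2 by simp
      hence "i1 - rw v (Rw v i1) (fw v (Rw v i1)) = i2 - rw v (Rw v i1) (fw v (Rw v i1))"
        unfolding gpos_def using R by simp
      moreover have "rw v (Rw v i1) (fw v (Rw v i1)) \<le> i1" "rw v (Rw v i1) (fw v (Rw v i1)) \<le> i2"
        using beta[OF l1' b1] beta[OF l2' b2] R by auto
      ultimately show ?thesis by linarith
    next
      case b2: False
      have "gpos v i1 = i2" using g gm b1 b2 by simp
      thus ?thesis using beta[OF l1' b1] l2' by simp
    qed
  next
    case b1: False
    show ?thesis
    proof (cases "B i2")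
      case b2: True
      have "gpos v i2 = i1" using g gm b1 b2 by simp
      thus ?thesis using beta[OF l2' b2] l1' by simp
    next
      case b2: False
      thus ?thesis using g gm b1 by simp
    qed
  qed
qed

lemma sorted_card_le:
  assumes so: "sorted xs" and di: "distinct xs" and c: "Suc k \<le> card {y \<in> set xs. y \<le> (x::nat)}"
  shows "k < length xs \<and> xs ! k \<le> x"
proof -
  have "card {y \<in> set xs. y \<le> x} \<le> card (set xs)" by (rule card_mono) auto
  also have "\<dots> = length xs" using di by (simp add: distinct_card)
  finally have kl: "k < length xs" using c by simp
  have "xs ! k \<le> x"
  proof (rule ccontr)
    assume "\<not> xs ! k \<le> x"
    hence gt: "x < xs ! k" by simp
    have "{y \<in> set xs. y \<le> x} \<subseteq> (\<lambda>m. xs ! m) ` {..<k}"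
    proof
      fix y assume "y \<in> {y \<in> set xs. y \<le> x}"
      then obtain m where m: "m < length xs" "xs ! m = y" "y \<le> x" by (auto simp: in_set_conv_nth)
      have "m < k"
      proof (rule ccontr)
        assume "\<not> m < k"
        hence "xs ! k \<le> xs ! m" using so m(1) by (simp add: sorted_nth_mono)
        thus False using m gt by simp
      qed
      thus "y \<in> (\<lambda>m. xs ! m) ` {..<k}" using m by auto
    qed
    hence "card {y \<in> set xs. y \<le> x} \<le> card ((\<lambda>m. xs ! m) ` {..<k})" by (rule card_mono[rotated]) simp
    also have "\<dots> \<le> k" using card_image_le[of "{..<k}" "\<lambda>m. xs ! m"] by simp
    finally show False using c by simp
  qed
  thus ?thesis using kl by simp
qed

lemma dominance:
  assumes fA: "finite A" and fB: "finite B" and inj: "inj_on g A" and gB: "\<forall>x\<in>A. g x \<in> B \<and> g x \<le> (x::nat)"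
    and k: "k < length (sorted_list_of_set A)"
  shows "k < length (sorted_list_of_set B) \<and> sorted_list_of_set B ! k \<le> sorted_list_of_set A ! k"
proof -
  define sa where "sa = sorted_list_of_set A"
  define sb where "sb = sorted_list_of_set B"
  define x where "x = sa ! k"
  have sa: "sorted sa" "distinct sa" "set sa = A" using fA by (auto simp: sa_def)
  have sb: "sorted sb" "distinct sb" "set sb = B" using fB by (auto simp: sb_def)
  have kk: "k < length sa" using k by (simp add: sa_def)
  define Ax where "Ax = {y \<in> A. y \<le> x}"
  have "(\<lambda>m. sa ! m) ` {..k} \<subseteq> Ax"
  proof
    fix y assume "y \<in> (\<lambda>m. sa ! m) ` {..k}"
    then obtain m where m: "m \<le> k" "y = sa ! m" by auto
    have "sa ! m \<le> sa ! k" using sa(1) m kk by (simp add: sorted_nth_mono)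
    moreover have "sa ! m \<in> A" using sa(3) m kk by auto
    ultimately show "y \<in> Ax" using m by (simp add: Ax_def x_def)
  qed
  moreover have "card ((\<lambda>m. sa ! m) ` {..k}) = Suc k"
  proof -
    have "inj_on (\<lambda>m. sa ! m) {..k}" using sa(2) kk by (auto simp: inj_on_def nth_eq_iff_index_eq)
    thus ?thesis by (simp add: card_image)
  qed
  moreover have "finite Ax" using fA by (simp add: Ax_def)
  ultimately have cA: "Suc k \<le> card Ax" by (metis card_mono)
  have "card Ax = card (g ` Ax)" using inj by (intro card_image[symmetric]) (auto simp: Ax_def inj_on_def)
  also have "\<dots> \<le> card {y \<in> set sb. y \<le> x}"
  proof (rule card_mono)
    show "finite {y \<in> set sb. y \<le> x}" by simp
    show "g ` Ax \<subseteq> {y \<in> set sb. y \<le> x}" using gB sb(3) by (auto simp: Ax_def)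
  qed
  finally have "Suc k \<le> card {y \<in> set sb. y \<le> x}" using cA by simp
  from sorted_card_le[OF sb(1) sb(2) this] show ?thesis by (simp add: sa_def sb_def x_def)
qed

lemma lost_finite: "finite {i. lost w i}"
  by (rule finite_subset[of _ "{..length w}"]) (auto simp: lost_def)

lemma P_step: "P d (v @ [a]) \<Longrightarrow> P d v"
proof -
  assume Pu: "P d (v @ [a])"
  define A where "A = {i. lost v i}"
  define B where "B = {i. lost (v @ [a]) i}"
  have g: "\<forall>x\<in>A. gmap v a x \<in> B \<and> gmap v a x \<le> x" using one_step_map by (auto simp: A_def B_def)
  have inj: "inj_on (gmap v a) A" using one_step_inj by (simp add: A_def)
  show "P d v"
    unfolding P_def Let_def
  proof (intro allI impI)
    fix k assume k: "k < length (sorted_list_of_set {i. lost v i})"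
    have dm: "k < length (sorted_list_of_set B) \<and> sorted_list_of_set B ! k \<le> sorted_list_of_set A ! k"
      using dominance[OF lost_finite[of v, folded A_def] lost_finite[of "v @ [a]", folded B_def] inj g] k
      by (simp add: A_def)
    hence "real (Suc k) * d \<le> real (sorted_list_of_set B ! k) - 1" using Pu unfolding P_def Let_def B_def by blast
    also have "\<dots> \<le> real (sorted_list_of_set A ! k) - 1" using dm by simp
    finally show "real (Suc k) * d \<le> real (sorted_list_of_set {i. lost v i} ! k) - 1" by (simp add: A_def)
  qed
qed

theorem lemma5:
  fixes d :: real and w v :: "bool list"
  assumes "P d w" and "prefix v w" and "v \<noteq> []"
  shows "P d v"
proof -
  obtain t where t: "w = v @ t" using assms(2) by (auto simp: prefix_def)
  have "P d (v @ t) \<Longrightarrow> P d v" for t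
  proof (induct t rule: rev_induct)
    case Nil thus ?case by simp
  next
    case (snoc x xs)
    hence "P d ((v @ xs) @ [x])" by simp
    hence "P d (v @ xs)" by (rule P_step)
    thus ?case using snoc by simp
  qed
  thus ?thesis using assms(1) t by simp
qed


end
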